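(* Let $r>0$ and assume $W$ satisfies (H). Then there exists a local minimizer $u\in L^\infty(\mathbb{R})$ of $\mathcal{E}$ which is monotone nondecreasing and satisfies $\lim_{x\to\pm\infty}u(x)=\pm1$. Moreover $$\mathcal{E}(u)=\min\Big\{\mathcal{E}(v)\ :\ v\in L^\infty(\mathbb{R})\text{ monotone nondecreasing with }\lim_{x\to\pm\infty}v(x)=\pm1\Big\}\le \min\Big\{\frac4r,\,4+c_W\Big\}.$$
   Context: Fix $r>0$. For an interval $I\subset\mathbb{R}$ and $u\in L^\infty(I)$, $\operatorname{osc}_I u:=\operatorname{ess\,sup}_I u-\operatorname{ess\,inf}_I u$. For $a<b$ with $b-a>2r$ and $u\in L^\infty_{\rm loc}(\mathbb{R})$, $$\mathcal{E}_{(a,b)}(u):=\frac1{2r^2}\int_a^b\Big(\operatorname{osc}_{(x-r,x+r)}u\Big)^2dx+\int_a^b W(u(x))\,dx,$$ and $\mathcal{E}(u):=\frac1{2r^2}\int_{\mathbb{R}}(\operatorname{osc}_{(x-r,x+r)}u)^2dx+\int_{\mathbb{R}}W(u(x))dx$. A function $u\in L^\infty_{\rm loc}(\mathbb{R})$ is a local minimizer of $\mathcal{E}$ if for all $a<b$ and all $v\in L^\infty_{\rm loc}(\mathbb{R})$ with $u=v$ a.e. outside $[a+r,b-r]$ one has $\mathcal{E}_{(a,b)}(u)\le\mathcal{E}_{(a,b)}(v)$. Assumption (H) on $W$: $W\in C(\mathbb{R})$, $W(-1)=W(1)=0<W(t)$ for all $t\ne\pm1$; $W$ is strictly decreasing on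 $(-\infty,-1)$ and strictly increasing on $(1,+\infty)$; $W$ is even on $[-1,1]$ and has a unique local maximum in $[-1,1]$, at $t=0$. Set $c_W:=\int_{-1}^1W(s)\,ds>0$. Limits of $L^\infty$ functions are understood in the essential sense. *)

theory Defs
  imports "HOL-Analysis.Analysis"
begin

definition ess_sup_on :: "real set \<Rightarrow> (real \<Rightarrow> real) \<Rightarrow> real" where
  "ess_sup_on I u = Inf {c. AE x in lebesgue. x \<in> I \<longrightarrow> u x \<le> c}"

definition ess_inf_on :: "real set \<Rightarrow> (real \<Rightarrow> real) \<Rightarrow> real" where
  "ess_inf_on I u = Sup {c. AE x in lebesgue. x \<in> I \<longrightarrow> c \<le> u x}"

definition osc_on :: "real set \<Rightarrow> (real \<Rightarrow> real) \<Rightarrow> real" where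
  "osc_on I u = ess_sup_on I u - ess_inf_on I u"

definition Linf :: "(real \<Rightarrow> real) \<Rightarrow> bool" where
  "Linf u \<longleftrightarrow> u \<in> borel_measurable lebesgue \<and> (\<exists>C. AE x in lebesgue. \<bar>u x\<bar> \<le> C)"

definition Linf_loc :: "(real \<Rightarrow> real) \<Rightarrow> bool" where
  "Linf_loc u \<longleftrightarrow> u \<in> borel_measurable lebesgue \<and>
     (\<forall>a b. \<exists>C. AE x in lebesgue. x \<in> {a..b} \<longrightarrow> \<bar>u x\<bar> \<le> C)"

definition energy_on :: "real \<Rightarrow> (real \<Rightarrow> real) \<Rightarrow> real \<Rightarrow> real \<Rightarrow> (real \<Rightarrow> real) \<Rightarrow> ennreal" where
  "energy_on r W a b u =
     (\<integral>\<^sup>+ x. indicator {a<..<b} x * ennreal ((osc_on {x-r<..<x+r} u)\<^sup>2 / (2 * r\<^sup>2)) \<partial>lebesgue)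
   + (\<integral>\<^sup>+ x. indicator {a<..<b} x * ennreal (W (u x)) \<partial>lebesgue)"

definition energy :: "real \<Rightarrow> (real \<Rightarrow> real) \<Rightarrow> (real \<Rightarrow> real) \<Rightarrow> ennreal" where
  "energy r W u =
     (\<integral>\<^sup>+ x. ennreal ((osc_on {x-r<..<x+r} u)\<^sup>2 / (2 * r\<^sup>2)) \<partial>lebesgue)
   + (\<integral>\<^sup>+ x. ennreal (W (u x)) \<partial>lebesgue)"

definition local_minimizer :: "real \<Rightarrow> (real \<Rightarrow> real) \<Rightarrow> (real \<Rightarrow> real) \<Rightarrow> bool" where
  "local_minimizer r W u \<longleftrightarrow> Linf_loc u \<and>
     (\<forall>a b v. a < b \<longrightarrow> b - a > 2 * r \<longrightarrow> Linf_loc v \<longrightarrow>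
        (AE x in lebesgue. x \<notin> {a+r..b-r} \<longrightarrow> u x = v x) \<longrightarrow>
        energy_on r W a b u \<le> energy_on r W a b v)"

definition local_max_in :: "real set \<Rightarrow> (real \<Rightarrow> real) \<Rightarrow> real \<Rightarrow> bool" where
  "local_max_in S W t \<longleftrightarrow> t \<in> S \<and> (\<exists>\<delta>>0. \<forall>s\<in>S. \<bar>s - t\<bar> < \<delta> \<longrightarrow> W s \<le> W t)"

definition hyp_H :: "(real \<Rightarrow> real) \<Rightarrow> bool" where
  "hyp_H W \<longleftrightarrow> continuous_on UNIV W \<and> W (-1) = 0 \<and> W 1 = 0 \<and>
     (\<forall>t. t \<noteq> 1 \<and> t \<noteq> -1 \<longrightarrow> W t > 0) \<and>
     (\<forall>s t. s < t \<and> t < -1 \<longrightarrow> W t < W s) \<and>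
     (\<forall>s t. 1 < s \<and> s < t \<longrightarrow> W s < W t) \<and>
     (\<forall>t\<in>{-1..1}. W (-t) = W t) \<and>
     (\<forall>t. local_max_in {-1..1} W t \<longleftrightarrow> t = 0)"

definition c_W :: "(real \<Rightarrow> real) \<Rightarrow> real" where
  "c_W W = integral {-1..1} W"

definition admissible :: "(real \<Rightarrow> real) \<Rightarrow> bool" where
  "admissible v \<longleftrightarrow> Linf v \<and> mono v \<and> (v \<longlongrightarrow> 1) at_top \<and> (v \<longlongrightarrow> -1) at_bot"

end

theory Submission
  imports Defs "HOL-Library.Nat_Bijection" "HOL-Library.Diagonal_Subsequence"
begin


section \<open>Facts about W\<close>

lemma H_nonneg: "hyp_H W \<Longrightarrow> 0 \<le> W t"
  unfolding hyp_H_def by (metis order.refl less_imp_le)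

lemma H_pos: "hyp_H W \<Longrightarrow> t \<noteq> 1 \<Longrightarrow> t \<noteq> -1 \<Longrightarrow> 0 < W t"
  unfolding hyp_H_def by blast

lemma H_one: "hyp_H W \<Longrightarrow> W 1 = 0" and H_mone: "hyp_H W \<Longrightarrow> W (-1) = 0"
  unfolding hyp_H_def by auto

lemma H_cont: "hyp_H W \<Longrightarrow> isCont W t"
  unfolding hyp_H_def using continuous_on_eq_continuous_at open_UNIV by blast

lemma H_cont_on: "hyp_H W \<Longrightarrow> continuous_on S W"
  unfolding hyp_H_def using continuous_on_subset by blast

lemma H_decr:
  assumes H: "hyp_H W" and s: "0 \<le> s" "s \<le> t" "t \<le> 1"
  shows "W t \<le> W s"
proof (rule ccontr)
  assume "\<not> W t \<le> W s"
  hence lt: "W s < W t" by simp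
  have "\<exists>p\<in>{s..1}. \<forall>y\<in>{s..1}. W y \<le> W p"
    using continuous_attains_sup[of "{s..1}" W] H_cont_on[OF H] s by auto
  then obtain p where p: "p \<in> {s..1}" "\<And>y. y \<in> {s..1} \<Longrightarrow> W y \<le> W p" by blast
  have "W t \<le> W p" using p s by auto
  hence "W s < W p" using lt by simp
  hence ps: "p \<noteq> s" by auto
  have "0 \<le> W s" using H_nonneg[OF H] .
  hence "p \<noteq> 1" using \<open>W s < W p\<close> H_one[OF H] by auto
  hence pin: "s < p" "p < 1" using p ps by auto
  have "local_max_in {-1..1} W p"
    unfolding local_max_in_def
  proof (intro conjI exI[of _ "min (p - s) (1 - p)"])
    show "p \<in> {-1..1}" using pin s by auto
    show "0 < min (p - s) (1 - p)" using pin by auto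
    show "\<forall>sa\<in>{- 1..1}. \<bar>sa - p\<bar> < min (p - s) (1 - p) \<longrightarrow> W sa \<le> W p"
      using p(2) by (auto simp: abs_less_iff)
  qed
  hence "p = 0" using H unfolding hyp_H_def by blast
  thus False using pin s by simp
qed

lemma H_even_abs: "hyp_H W \<Longrightarrow> \<bar>y\<bar> \<le> 1 \<Longrightarrow> W \<bar>y\<bar> = W y"
  unfolding hyp_H_def by (cases "y \<ge> 0") (auto)

lemma H_abs:
  assumes H: "hyp_H W" and "\<bar>x\<bar> \<le> \<bar>y\<bar>" "\<bar>y\<bar> \<le> 1"
  shows "W y \<le> W x"
proof -
  have "W \<bar>y\<bar> \<le> W \<bar>x\<bar>" using H_decr[OF H, of "\<bar>x\<bar>" "\<bar>y\<bar>"] assms by simp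
  thus ?thesis using H_even_abs[OF H] assms by simp
qed

definition clamp :: "real \<Rightarrow> real" where "clamp t = max (-1) (min 1 t)"

lemma clamp_abs: "\<bar>clamp t\<bar> \<le> 1" unfolding clamp_def by auto
lemma clamp_lip: "\<bar>clamp x - clamp y\<bar> \<le> \<bar>x - y\<bar>" unfolding clamp_def by auto
lemma clamp_mono: "x \<le> y \<Longrightarrow> clamp x \<le> clamp y" unfolding clamp_def by auto
lemma clamp_id: "\<bar>x\<bar> \<le> 1 \<Longrightarrow> clamp x = x" unfolding clamp_def by auto
lemma clamp_sign: "0 \<le> x \<longleftrightarrow> 0 \<le> clamp x" unfolding clamp_def by auto
lemma H_clamp: "hyp_H W \<Longrightarrow> W (clamp t) \<le> W t"
  unfolding clamp_def using H_nonneg[of W t] H_one[of W] H_mone[of W]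
  by (cases "t \<le> -1"; cases "t \<ge> 1") (auto simp: max_def min_def)
lemma continuous_clamp: "isCont clamp x" unfolding clamp_def by (intro continuous_intros)
lemma clamp_ind: "hyp_H W \<Longrightarrow> W (clamp x) = indicator {-1..1} x * W x"
  unfolding clamp_def using H_one[of W] H_mone[of W]
  by (auto simp: max_def min_def indicator_def)

section \<open>Discrete problem\<close>

definition trm :: "real \<Rightarrow> (real\<Rightarrow>real) \<Rightarrow> (int \<Rightarrow> real) \<Rightarrow> int \<Rightarrow> real" where
  "trm r W b k = (b (k+1) - b k)\<^sup>2 / (2*r\<^sup>2) + W (b k)"

definition FF :: "real \<Rightarrow> (real\<Rightarrow>real) \<Rightarrow> (int \<Rightarrow> real) \<Rightarrow> ennreal" where
  "FF r W b = (\<integral>\<^sup>+k. ennreal (trm r W b k) \<partial>count_space UNIV)"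

definition good :: "(int \<Rightarrow> real) \<Rightarrow> bool" where
  "good b \<longleftrightarrow> (b \<longlongrightarrow> 1) at_top \<and> (b \<longlongrightarrow> -1) at_bot"

definition CC :: "(int \<Rightarrow> real) set" where
  "CC = {c. mono c \<and> (\<forall>k. \<bar>c k\<bar> \<le> 1) \<and> good c \<and> c (-1) \<le> 0 \<and> 0 \<le> c 0}"

definition mm :: "real \<Rightarrow> (real\<Rightarrow>real) \<Rightarrow> ennreal" where
  "mm r W = Inf (FF r W ` CC)"

lemma mono_int_step:
  fixes f :: "int \<Rightarrow> real"
  assumes "\<And>k. f k \<le> f (k+1)"
  shows "mono f"
proof (rule monoI)
  fix i j :: int assume "i \<le> j"
  then obtain n where j: "j = i + int n" by (metis le_iff_add nat_int zle_iff_zadd)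
  have "f i \<le> f (i + int n)"
  proof (induction n)
    case 0 show ?case by simp
  next
    case (Suc n)
    have "f (i + int n) \<le> f (i + int n + 1)" by (rule assms)
    moreover have e: "i + int (Suc n) = i + int n + 1" by simp
    ultimately show ?case unfolding e using Suc by linarith
  qed
  thus "f i \<le> f j" using j by simp
qed

lemma trm_nonneg: "hyp_H W \<Longrightarrow> 0 \<le> trm r W b k"
  unfolding trm_def using H_nonneg[of W] by (intro add_nonneg_nonneg) auto

lemma filterlim_int_shift_top: "filterlim (\<lambda>k::int. k + K) at_top at_top"
  unfolding filterlim_at_top
proof
  fix Z show "\<forall>\<^sub>F x in at_top. Z \<le> x + K"
    using eventually_ge_at_top[of "Z - K"] by eventually_elim simp
qed

lemma filterlim_int_shift_bot: "filterlim (\<lambda>k::int. k + K) at_bot at_bot"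
  unfolding filterlim_at_bot
proof
  fix Z show "\<forall>\<^sub>F x in at_bot. x + K \<le> Z"
    using eventually_le_at_bot[of "Z - K"] by eventually_elim simp
qed

lemma bij_int_shift: "bij_betw (\<lambda>k::int. k + K) UNIV UNIV"
  by (rule bij_betw_byWitness[of _ "\<lambda>k. k - K"]) auto

lemma reduction:
  assumes H: "hyp_H W" and gb: "good b"
  shows "\<exists>c\<in>CC. FF r W c \<le> FF r W b"
proof -
  define b' where "b' k = clamp (b k)" for k
  have cl1: "clamp 1 = 1" and clm1: "clamp (-1) = -1" by (auto simp: clamp_def)
  have b'top: "(b' \<longlongrightarrow> 1) at_top"
    unfolding b'_def using isCont_tendsto_compose[OF continuous_clamp, of b 1 at_top] gb cl1
    by (simp add: good_def)
  have b'bot: "(b' \<longlongrightarrow> -1) at_bot"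
    unfolding b'_def using isCont_tendsto_compose[OF continuous_clamp, of b "-1" at_bot] gb clm1
    by (simp add: good_def)
  have "\<forall>\<^sub>F k in at_bot. b' k < 0" using order_tendstoD(2)[OF b'bot, of 0] by simp
  then obtain N where N: "\<And>k. k \<le> N \<Longrightarrow> b' k < 0" by (auto simp: eventually_at_bot_linorder)
  have "\<forall>\<^sub>F k in at_top. b' k > 0" using order_tendstoD(1)[OF b'top, of 0] by simp
  then obtain M where M: "\<And>k. k \<ge> M \<Longrightarrow> b' k > 0" by (auto simp: eventually_at_top_linorder)
  have "\<exists>K. b' (K-1) < 0 \<and> 0 \<le> b' K"
  proof (rule ccontr)
    assume nt: "\<not> ?thesis"
    have st: "0 \<le> b' (K-1)" if "0 \<le> b' K" for K using nt that by (meson not_le)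
    have "0 \<le> b' (M - int n)" for n
    proof (induction n)
      case 0 thus ?case using M[of M] by simp
    next
      case (Suc n)
      have e: "M - int (Suc n) = (M - int n) - 1" by simp
      show ?case unfolding e by (rule st[OF Suc])
    qed
    from this[of "nat (M - N)"] N[of "M - int (nat (M - N))"] show False by (auto split: if_splits)
  qed
  then obtain K where K: "b' (K-1) < 0" "0 \<le> b' K" by blast
  define \<beta> where "\<beta> k = b' (k + K)" for k
  have bm1: "\<beta> (-1) < 0" and b0: "0 \<le> \<beta> 0" using K by (auto simp: \<beta>_def add.commute)
  have babs: "\<bar>\<beta> k\<bar> \<le> 1" for k by (simp add: \<beta>_def b'_def clamp_abs)
  define c where "c k = (if 0 \<le> k then Max ((\<lambda>j. \<bar>\<beta> j\<bar>) ` {0..k})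
                         else - Max ((\<lambda>j. \<bar>\<beta> j\<bar>) ` {k..-1}))" for k
  have cpos: "c (k+1) = max (c k) \<bar>\<beta> (k+1)\<bar>" if "0 \<le> k" for k
  proof -
    have "{0..k+1} = insert (k+1) {0..k}" using that by auto
    thus ?thesis using that by (simp add: c_def Max_insert max.commute)
  qed
  have cneg: "c k = min (c (k+1)) (- \<bar>\<beta> k\<bar>)" if "k \<le> -2" for k
  proof -
    have "{k..-1} = insert k {k+1..-1}" using that by auto
    hence "c k = - max \<bar>\<beta> k\<bar> (Max ((\<lambda>j. \<bar>\<beta> j\<bar>) ` {k+1..-1}))"
      using that by (simp add: c_def Max_insert)
    moreover have "c (k+1) = - Max ((\<lambda>j. \<bar>\<beta> j\<bar>) ` {k+1..-1})" using that by (simp add: c_def)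
    ultimately show ?thesis by (simp add: min_def max_def)
  qed
  have c0: "c 0 = \<beta> 0" using b0 by (simp add: c_def)
  have cm1: "c (-1) = \<beta> (-1)" using bm1 by (simp add: c_def)
  have cge: "\<bar>\<beta> k\<bar> \<le> \<bar>c k\<bar> \<and> \<bar>c k\<bar> \<le> 1 \<and> (0 \<le> k \<longrightarrow> 0 \<le> c k) \<and> (k < 0 \<longrightarrow> c k \<le> 0)" for k
  proof (cases "0 \<le> k")
    case True
    have m1: "\<bar>\<beta> k\<bar> \<le> Max ((\<lambda>j. \<bar>\<beta> j\<bar>) ` {0..k})" using True by (intro Max_ge) auto
    have m2: "Max ((\<lambda>j. \<bar>\<beta> j\<bar>) ` {0..k}) \<le> 1" using True babs by (subst Max_le_iff) auto
    have ck: "c k = Max ((\<lambda>j. \<bar>\<beta> j\<bar>) ` {0..k})" using True by (simp add: c_def)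
    show ?thesis unfolding ck using True m1 m2 abs_ge_zero[of "\<beta> k"] by linarith
  next
    case False
    have m1: "\<bar>\<beta> k\<bar> \<le> Max ((\<lambda>j. \<bar>\<beta> j\<bar>) ` {k..-1})" using False by (intro Max_ge) auto
    have m2: "Max ((\<lambda>j. \<bar>\<beta> j\<bar>) ` {k..-1}) \<le> 1" using False babs by (subst Max_le_iff) auto
    have ck: "c k = - Max ((\<lambda>j. \<bar>\<beta> j\<bar>) ` {k..-1})" using False by (simp add: c_def)
    show ?thesis unfolding ck using False m1 m2 abs_ge_zero[of "\<beta> k"] by linarith
  qed
  have cstep: "c k \<le> c (k+1) \<and> \<bar>c (k+1) - c k\<bar> \<le> \<bar>\<beta> (k+1) - \<beta> k\<bar>" for k
  proof -
    consider "0 \<le> k" | "k = -1" | "k \<le> -2" by linarith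
    thus ?thesis
    proof cases
      case 1
      have "\<bar>\<beta> k\<bar> \<le> c k" using cge[of k] 1 by (metis abs_of_nonneg)
      thus ?thesis using cpos[OF 1] by (auto simp: max_def abs_if split: if_splits)
    next
      case 2
      thus ?thesis using c0 cm1 bm1 b0 by simp
    next
      case 3
      have "c (k+1) \<le> - \<bar>\<beta> (k+1)\<bar>" using cge[of "k+1"] 3 by (smt (verit))
      thus ?thesis using cneg[OF 3] by (auto simp: min_def abs_if split: if_splits)
    qed
  qed
  have trm_le: "trm r W c k \<le> trm r W b (k + K)" for k
  proof -
    have A: "\<bar>c (k+1) - c k\<bar> \<le> \<bar>\<beta> (k+1) - \<beta> k\<bar>" using cstep[of k] by blast
    have B: "\<bar>\<beta> (k+1) - \<beta> k\<bar> \<le> \<bar>b (k + K + 1) - b (k + K)\<bar>"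
      unfolding \<beta>_def b'_def using clamp_lip[of "b (k + 1 + K)" "b (k+K)"] by (simp add: ac_simps)
    have "\<bar>c (k+1) - c k\<bar> \<le> \<bar>b (k + K + 1) - b (k + K)\<bar>" using A B by linarith
    hence 1: "(c (k+1) - c k)\<^sup>2 \<le> (b (k + K + 1) - b (k + K))\<^sup>2"
      by (simp add: abs_le_square_iff)
    have "W (c k) \<le> W (\<beta> k)" using H_abs[OF H, of "\<beta> k" "c k"] cge[of k] by simp
    also have "\<dots> \<le> W (b (k+K))" by (simp add: \<beta>_def b'_def H_clamp[OF H])
    finally have 2: "W (c k) \<le> W (b (k + K))" .
    show ?thesis unfolding trm_def using 1 2
      by (intro add_mono divide_right_mono) (auto simp: ac_simps)
  qed
  have "FF r W c \<le> (\<integral>\<^sup>+k. ennreal (trm r W b (k + K)) \<partial>count_space UNIV)"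
    unfolding FF_def by (intro nn_integral_mono ennreal_leI trm_le)
  also have "\<dots> = FF r W b"
    unfolding FF_def by (rule nn_integral_bij_count_space[OF bij_int_shift])
  finally have Fle: "FF r W c \<le> FF r W b" .
  have btop: "(\<beta> \<longlongrightarrow> 1) at_top"
    unfolding \<beta>_def using filterlim_compose[OF b'top filterlim_int_shift_top] by simp
  have bbot: "(\<beta> \<longlongrightarrow> -1) at_bot"
    unfolding \<beta>_def using filterlim_compose[OF b'bot filterlim_int_shift_bot] by simp
  have "(c \<longlongrightarrow> 1) at_top"
  proof (rule tendsto_sandwich[of "\<lambda>k. \<bar>\<beta> k\<bar>" c at_top "\<lambda>k. 1"])
    show "\<forall>\<^sub>F n in at_top. \<bar>\<beta> n\<bar> \<le> c n"
      using eventually_ge_at_top[of 0] by eventually_elim (metis abs_of_nonneg cge)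
    show "\<forall>\<^sub>F n in at_top. c n \<le> 1" using cge by (auto simp: abs_le_iff)
    show "((\<lambda>k. \<bar>\<beta> k\<bar>) \<longlongrightarrow> 1) at_top" using tendsto_rabs[OF btop] by simp
  qed simp
  moreover have "(c \<longlongrightarrow> -1) at_bot"
  proof (rule tendsto_sandwich[of "\<lambda>k. -1" c at_bot "\<lambda>k. - \<bar>\<beta> k\<bar>"])
    show "\<forall>\<^sub>F n in at_bot. c n \<le> - \<bar>\<beta> n\<bar>"
      using eventually_le_at_bot[of "-1"] by eventually_elim (smt (verit) cge)
    show "\<forall>\<^sub>F n in at_bot. -1 \<le> c n" using cge by (auto simp: abs_le_iff)
    show "((\<lambda>k. - \<bar>\<beta> k\<bar>) \<longlongrightarrow> -1) at_bot" using tendsto_minus[OF tendsto_rabs[OF bbot]] by simp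
  qed simp
  moreover have "mono c" using cstep by (intro mono_int_step) auto
  ultimately have "c \<in> CC" using cge[of "-1"] cge[of 0]
    by (auto simp: CC_def good_def cge)
  thus ?thesis using Fle by blast
qed

lemma mm_le: "hyp_H W \<Longrightarrow> good b \<Longrightarrow> mm r W \<le> FF r W b"
  using reduction[of W b r] unfolding mm_def by (meson INF_lower2)

lemma FF_infinite:
  assumes H: "hyp_H W" and S: "infinite S" and d: "0 < \<delta>" and le: "\<And>k. k \<in> S \<Longrightarrow> \<delta> \<le> W (c k)"
  shows "FF r W c = \<infinity>"
proof -
  have "(\<integral>\<^sup>+k. ennreal \<delta> * indicator S k \<partial>count_space UNIV) \<le> FF r W c"
    unfolding FF_def
  proof (intro nn_integral_mono)
    fix k :: int
    show "ennreal \<delta> * indicator S k \<le> ennreal (trm r W c k)"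
    proof (cases "k \<in> S")
      case True
      have "\<delta> \<le> trm r W c k" using le[OF True] unfolding trm_def by (simp add: add_increasing)
      thus ?thesis using True by (simp add: ennreal_leI)
    qed simp
  qed
  moreover have "(\<integral>\<^sup>+k. ennreal \<delta> * indicator S k \<partial>count_space UNIV) = ennreal \<delta> * emeasure (count_space UNIV) S"
    by (rule nn_integral_cmult_indicator) simp
  moreover have "emeasure (count_space UNIV) S = \<infinity>" using S by (simp add: emeasure_count_space_infinite)
  moreover have "ennreal \<delta> \<noteq> 0" using d by simp
  ultimately show ?thesis by (simp add: top_unique ennreal_mult_top)
qed

lemma CC_good:
  assumes H: "hyp_H W" and mc: "mono c" and b1: "\<And>k. \<bar>c k\<bar> \<le> 1" and cm1: "c (-1) \<le> 0" and c0: "0 \<le> c 0"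
    and fin: "FF r W c < \<infinity>"
  shows "good c"
proof -
  have "(c \<longlongrightarrow> 1) at_top"
  proof (rule order_tendstoI)
    fix y :: real assume y: "y < 1"
    show "\<forall>\<^sub>F k in at_top. y < c k"
    proof (cases "\<exists>k0. y < c k0")
      case True
      then obtain k0 where "y < c k0" by blast
      hence "\<forall>k. k0 \<le> k \<longrightarrow> y < c k" using monoD[OF mc] by (meson less_le_trans)
      thus ?thesis by (auto simp: eventually_at_top_linorder)
    next
      case False
      define t where "t = max y 0"
      have t: "0 \<le> t" "t < 1" using y by (auto simp: t_def)
      have "FF r W c = \<infinity>"
      proof (rule FF_infinite[OF H, of "range int" "W t"])
        show "infinite (range int)" by (simp add: range_inj_infinite)
        show "0 < W t" using t by (intro H_pos[OF H]) auto
        fix k assume "k \<in> range int"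
        hence "0 \<le> k" by auto
        hence "0 \<le> c k" using c0 mc by (meson monoD order_trans)
        moreover have "c k \<le> y" using False by (meson not_less)
        hence "c k \<le> t" by (simp add: t_def le_max_iff_disj)
        ultimately show "W t \<le> W (c k)" using t by (intro H_abs[OF H]) auto
      qed
      thus ?thesis using fin by simp
    qed
  next
    fix y :: real assume "1 < y"
    have "c k < y" for k using b1[of k] \<open>1 < y\<close> by (simp add: abs_le_iff)
    thus "\<forall>\<^sub>F k in at_top. c k < y" by (simp add: always_eventually)
  qed
  moreover have "(c \<longlongrightarrow> -1) at_bot"
  proof (rule order_tendstoI)
    fix y :: real assume y: "-1 < y"
    show "\<forall>\<^sub>F k in at_bot. c k < y"
    proof (cases "\<exists>k0. c k0 < y")
      case True
      then obtain k0 where "c k0 < y" by blast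
      hence "\<forall>k. k \<le> k0 \<longrightarrow> c k < y" using monoD[OF mc] by (meson le_less_trans)
      thus ?thesis by (auto simp: eventually_at_bot_linorder)
    next
      case False
      define t where "t = min y 0"
      have t: "t \<le> 0" "-1 < t" using y by (auto simp: t_def)
      have "FF r W c = \<infinity>"
      proof (rule FF_infinite[OF H, of "range (\<lambda>n::nat. - int n - 1)" "W t"])
        show "infinite (range (\<lambda>n::nat. - int n - 1))" by (rule range_inj_infinite) (simp add: inj_def)
        show "0 < W t" using t by (intro H_pos[OF H]) auto
        fix k assume "k \<in> range (\<lambda>n::nat. - int n - 1)"
        hence "k \<le> -1" by auto
        hence "c k \<le> 0" using cm1 mc by (meson monoD order_trans)
        moreover have "y \<le> c k" using False by (meson not_less)
        hence "t \<le> c k" by (simp add: t_def min_le_iff_disj)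
        ultimately show "W t \<le> W (c k)" using t by (intro H_abs[OF H]) auto
      qed
      thus ?thesis using fin by simp
    qed
  next
    fix y :: real assume "y < -1"
    have "y < c k" for k using b1[of k] \<open>y < -1\<close> by (simp add: abs_le_iff)
    thus "\<forall>\<^sub>F k in at_bot. y < c k" by (simp add: always_eventually)
  qed
  ultimately show ?thesis by (simp add: good_def)
qed

definition step0 :: "int \<Rightarrow> real" where "step0 k = (if k < 0 then -1 else 1)"

lemma step0_CC: "step0 \<in> CC"
proof -
  have "(step0 \<longlongrightarrow> 1) at_top"
    by (rule tendsto_eventually) (use eventually_ge_at_top[of 0] in \<open>eventually_elim, simp add: step0_def\<close>)
  moreover have "(step0 \<longlongrightarrow> -1) at_bot"
    by (rule tendsto_eventually) (use eventually_le_at_bot[of "-1"] in \<open>eventually_elim, simp add: step0_def\<close>)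
  moreover have "mono step0" by (auto simp: mono_def step0_def)
  ultimately show ?thesis by (auto simp: CC_def good_def step0_def)
qed

lemma FF_step0:
  fixes r :: real and W :: "real \<Rightarrow> real"
  assumes H: "hyp_H W" and r: "r > 0"
  shows "FF r W step0 = ennreal (2 / r\<^sup>2)"
proof -
  have "ennreal (trm r W step0 k) = ennreal (2 / r\<^sup>2) * indicator {-1} k" for k
  proof -
    consider "k = -1" | "k < -1" | "k \<ge> 0" by linarith
    thus ?thesis
    proof cases
      case 1 thus ?thesis using H_mone[OF H] by (simp add: trm_def step0_def power2_eq_square)
    next
      case 2 thus ?thesis using H_mone[OF H] by (simp add: trm_def step0_def)
    next
      case 3 thus ?thesis using H_one[OF H] by (simp add: trm_def step0_def)
    qed
  qed
  hence e1: "FF r W step0 = (\<integral>\<^sup>+k. ennreal (2 / r\<^sup>2) * indicator {-1::int} k \<partial>count_space UNIV)"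
    unfolding FF_def by simp
  have e2: "(\<integral>\<^sup>+k. ennreal (2 / r\<^sup>2) * indicator {-1::int} k \<partial>count_space UNIV) = ennreal (2 / r\<^sup>2) * emeasure (count_space UNIV) {-1::int}"
    by (rule nn_integral_cmult_indicator) simp
  have e3: "emeasure (count_space UNIV) {-1::int} = 1" by (simp add: emeasure_count_space_finite)
  show ?thesis using e1 e2 e3 by simp
qed

lemma exists_min:
  assumes H: "hyp_H W" and r: "r > 0"
  shows "\<exists>a\<in>CC. FF r W a = mm r W \<and> mm r W \<le> ennreal (2 / r\<^sup>2)"
proof -
  have "mm r W \<le> FF r W step0" unfolding mm_def by (rule INF_lower[OF step0_CC])
  hence mmle: "mm r W \<le> ennreal (2 / r\<^sup>2)" using FF_step0[OF H r] by simp
  have "FF r W ` CC \<noteq> {}" using step0_CC by auto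
  from Inf_as_limit[OF this] obtain u where u: "\<And>n. u n \<in> FF r W ` CC" "u \<longlonglongrightarrow> mm r W"
    unfolding mm_def by blast
  have "\<forall>n. \<exists>c. c \<in> CC \<and> FF r W c = u n" using u(1) by (metis imageE)
  then obtain cs where csx: "\<forall>n. cs n \<in> CC \<and> FF r W (cs n) = u n" by metis
  have cs: "\<And>n. cs n \<in> CC" "\<And>n. FF r W (cs n) = u n" using csx by auto
  have csb: "\<bar>cs n k\<bar> \<le> 1" for n k using cs(1)[of n] by (auto simp: CC_def)
  let ?P = "\<lambda>n. \<lambda>s. convergent (\<lambda>j. cs (s j) (int_decode n))"
  interpret nat: subseqs ?P
  proof (unfold convergent_def, unfold subseqs_def, auto)
    fix n :: nat and s :: "nat \<Rightarrow> nat" assume s: "strict_mono s"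
    have "bounded {-1..1::real}" using bounded_closed_interval by auto
    moreover have "\<And>k. cs (s k) (int_decode n) \<in> {-1..1}"
      using csb by (simp add: abs_le_iff minus_le_iff)
    ultimately have "\<exists>l s'. strict_mono s' \<and> ((\<lambda>k. cs (s k) (int_decode n)) \<circ> s') \<longlonglongrightarrow> l"
      using compact_Icc compact_imp_seq_compact seq_compactE by metis
    thus "\<exists>s'. strict_mono (s'::nat\<Rightarrow>nat) \<and> (\<exists>l. (\<lambda>k. cs (s (s' k)) (int_decode n)) \<longlonglongrightarrow> l)"
      by (auto simp: comp_def)
  qed
  define d where "d = nat.diagseq"
  have subseq: "strict_mono d"
    unfolding d_def using nat.subseq_diagseq by auto
  have rat_cnv: "?P n d" for n
  proof -
    have Pn_seqseq: "?P n (nat.seqseq (Suc n))"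
      by (rule nat.seqseq_holds)
    have 1: "(\<lambda>k. cs ((nat.seqseq (Suc n) \<circ> (\<lambda>k. nat.fold_reduce (Suc n) k
      (Suc n + k))) k) (int_decode n)) = (\<lambda>k. cs (nat.seqseq (Suc n) k) (int_decode n)) \<circ>
      (\<lambda>k. nat.fold_reduce (Suc n) k (Suc n + k))"
      by auto
    have 2: "?P n (d \<circ> ((+) (Suc n)))"
      unfolding d_def nat.diagseq_seqseq 1
      by (intro convergent_subseq_convergent Pn_seqseq nat.subseq_diagonal_rest)
    then obtain L where 3: "(\<lambda>na. cs (d (na + Suc n)) (int_decode n)) \<longlonglongrightarrow> L"
      by (auto simp: add.commute dest: convergentD)
    then have "(\<lambda>k. cs (d k) (int_decode n)) \<longlonglongrightarrow> L"
      by (rule LIMSEQ_offset)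
    then show ?thesis
      by (auto simp: convergent_def)
  qed
  define a where "a k = lim (\<lambda>j. cs (d j) k)" for k
  have lima: "(\<lambda>j. cs (d j) k) \<longlonglongrightarrow> a k" for k
    using rat_cnv[of "int_encode k"] unfolding a_def by (simp add: int_encode_inverse convergent_LIMSEQ_iff)
  have ma: "mono a"
  proof (rule monoI)
    fix i j :: int assume "i \<le> j"
    thus "a i \<le> a j" using cs(1) by (intro LIMSEQ_le[OF lima lima]) (auto simp: CC_def monoD)
  qed
  have ab: "\<bar>a k\<bar> \<le> 1" for k using csb by (intro LIMSEQ_le_const2[OF tendsto_rabs[OF lima]]) auto
  have am1: "a (-1) \<le> 0" using cs(1) by (intro LIMSEQ_le_const2[OF lima]) (auto simp: CC_def)
  have a0: "0 \<le> a 0" using cs(1) by (intro LIMSEQ_le_const[OF lima]) (auto simp: CC_def)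
  have r2: "2 * r\<^sup>2 \<noteq> 0" using r by simp
  have tt: "(\<lambda>j. ennreal (trm r W (cs (d j)) k)) \<longlonglongrightarrow> ennreal (trm r W a k)" for k
    unfolding trm_def using r2
    by (intro tendsto_ennrealI tendsto_intros lima isCont_tendsto_compose[OF H_cont[OF H]])
  have "FF r W a = (\<integral>\<^sup>+k. liminf (\<lambda>j. ennreal (trm r W (cs (d j)) k)) \<partial>count_space UNIV)"
    unfolding FF_def using lim_imp_Liminf[OF trivial_limit_sequentially tt] by simp
  also have "\<dots> \<le> liminf (\<lambda>j. FF r W (cs (d j)))"
    unfolding FF_def by (rule nn_integral_liminf) simp
  also have "liminf (\<lambda>j. FF r W (cs (d j))) = mm r W"
  proof -
    have "(\<lambda>j. FF r W (cs (d j))) \<longlonglongrightarrow> mm r W"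
      using LIMSEQ_subseq_LIMSEQ[OF u(2) subseq] cs(2) by (simp add: comp_def)
    thus ?thesis by (simp add: lim_imp_Liminf)
  qed
  finally have Fa: "FF r W a \<le> mm r W" .
  hence "FF r W a < \<infinity>" using mmle by (simp add: top.not_eq_extremum le_less_trans)
  hence "good a" using CC_good[OF H ma ab am1 a0] by simp
  hence aC: "a \<in> CC" using ma ab am1 a0 by (simp add: CC_def)
  hence "mm r W \<le> FF r W a" unfolding mm_def by (rule INF_lower)
  thus ?thesis using Fa aC mmle by (intro bexI[of _ a]) auto
qed



section \<open>Essential sup/inf on open intervals\<close>

lemma AE_interval_nonnull:
  assumes "c < (d::real)"
  shows "\<not> (AE x in lebesgue. x \<notin> {c<..<d})"
proof
  assume "AE x in lebesgue. x \<notin> {c<..<d}"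
  hence "AE x in lborel. x \<notin> {c<..<d}" by (simp add: AE_completion_iff)
  hence "{c<..<d} \<in> null_sets lborel" by (subst AE_iff_null_sets) auto
  hence "emeasure lborel {c<..<d} = 0" by auto
  thus False using assms by simp
qed

lemma AE_interval_False:
  assumes "c < (d::real)" "AE x in lebesgue. x \<in> {c<..<d} \<longrightarrow> False"
  shows False
  using AE_interval_nonnull[OF assms(1)] assms(2) by simp

lemma le_eps_Suc:
  fixes a b :: real
  assumes "\<And>n. a \<le> b + 1 / Suc n"
  shows "a \<le> b"
proof (rule ccontr)
  assume "\<not> a \<le> b"
  then obtain n where "inverse (real (Suc n)) < a - b"
    using reals_Archimedean[of "a - b"] by auto
  thus False using assms[of n] by (simp add: field_simps)
qed

context
  fixes c d C :: real and u :: "real \<Rightarrow> real"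
  assumes cd: "c < d" and bnd: "AE x in lebesgue. x \<in> {c<..<d} \<longrightarrow> \<bar>u x\<bar> \<le> C"
begin

lemma ES_lower:
  assumes "AE x in lebesgue. x \<in> {c<..<d} \<longrightarrow> u x \<le> z"
  shows "- C \<le> z"
proof (rule ccontr)
  assume "\<not> - C \<le> z"
  have "AE x in lebesgue. x \<in> {c<..<d} \<longrightarrow> False"
    using bnd assms by eventually_elim (use \<open>\<not> - C \<le> z\<close> in auto)
  thus False using AE_interval_False[OF cd] by blast
qed

lemma EI_upper:
  assumes "AE x in lebesgue. x \<in> {c<..<d} \<longrightarrow> z \<le> u x"
  shows "z \<le> C"
proof (rule ccontr)
  assume "\<not> z \<le> C"
  have "AE x in lebesgue. x \<in> {c<..<d} \<longrightarrow> False"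
    using bnd assms by eventually_elim (use \<open>\<not> z \<le> C\<close> in auto)
  thus False using AE_interval_False[OF cd] by blast
qed

lemma ES_set: "C \<in> {z. AE x in lebesgue. x \<in> {c<..<d} \<longrightarrow> u x \<le> z}"
  "bdd_below {z. AE x in lebesgue. x \<in> {c<..<d} \<longrightarrow> u x \<le> z}"
  using bnd ES_lower by (auto simp: bdd_below_def abs_le_iff elim: eventually_mono)

lemma EI_set: "-C \<in> {z. AE x in lebesgue. x \<in> {c<..<d} \<longrightarrow> z \<le> u x}"
  "bdd_above {z. AE x in lebesgue. x \<in> {c<..<d} \<longrightarrow> z \<le> u x}"
  using bnd EI_upper by (auto simp: bdd_above_def abs_le_iff elim: eventually_mono)

lemma ES2:
  assumes "AE x in lebesgue. x \<in> {c<..<d} \<longrightarrow> u x \<le> z"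
  shows "ess_sup_on {c<..<d} u \<le> z"
  unfolding ess_sup_on_def using assms ES_set by (intro cInf_lower) auto

lemma EI2:
  assumes "AE x in lebesgue. x \<in> {c<..<d} \<longrightarrow> z \<le> u x"
  shows "z \<le> ess_inf_on {c<..<d} u"
  unfolding ess_inf_on_def using assms EI_set by (intro cSup_upper) auto

lemma ES1: "AE x in lebesgue. x \<in> {c<..<d} \<longrightarrow> u x \<le> ess_sup_on {c<..<d} u"
proof -
  let ?S = "{z. AE x in lebesgue. x \<in> {c<..<d} \<longrightarrow> u x \<le> z}"
  have ne: "?S \<noteq> {}" using ES_set by auto
  have h: "AE x in lebesgue. x \<in> {c<..<d} \<longrightarrow> u x \<le> Inf ?S + 1 / Suc n" for n
  proof -
    have "Inf ?S < Inf ?S + 1 / Suc n" by simp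
    then obtain z where z: "z \<in> ?S" "z < Inf ?S + 1 / Suc n"
      using cInf_less_iff[OF ne ES_set(2)] by blast
    thus ?thesis by (auto elim: eventually_mono)
  qed
  have "AE x in lebesgue. \<forall>n. x \<in> {c<..<d} \<longrightarrow> u x \<le> Inf ?S + 1 / Suc n"
    using h by (simp only: AE_all_countable) blast
  thus ?thesis unfolding ess_sup_on_def
    by eventually_elim (auto intro: le_eps_Suc)
qed

lemma EI1: "AE x in lebesgue. x \<in> {c<..<d} \<longrightarrow> ess_inf_on {c<..<d} u \<le> u x"
proof -
  let ?S = "{z. AE x in lebesgue. x \<in> {c<..<d} \<longrightarrow> z \<le> u x}"
  have ne: "?S \<noteq> {}" using EI_set by auto
  have h: "AE x in lebesgue. x \<in> {c<..<d} \<longrightarrow> Sup ?S - 1 / Suc n \<le> u x" for n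
  proof -
    have "Sup ?S - 1 / Suc n < Sup ?S" by simp
    then obtain z where z: "z \<in> ?S" "Sup ?S - 1 / Suc n < z"
      using less_cSup_iff[OF ne EI_set(2)] by blast
    thus ?thesis by (auto elim: eventually_mono)
  qed
  have "AE x in lebesgue. \<forall>n. x \<in> {c<..<d} \<longrightarrow> Sup ?S - 1 / Suc n \<le> u x"
    using h by (simp only: AE_all_countable) blast
  thus ?thesis unfolding ess_inf_on_def
    by eventually_elim (auto intro: le_eps_Suc simp: algebra_simps)
qed

lemma ES3:
  assumes "AE x in lebesgue. x \<in> {c<..<d} \<longrightarrow> z \<le> u x"
  shows "z \<le> ess_sup_on {c<..<d} u"
proof (rule ccontr)
  assume nt: "\<not> ?thesis"
  have "AE x in lebesgue. x \<in> {c<..<d} \<longrightarrow> False"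
    using assms ES1 by eventually_elim (use nt in auto)
  thus False using AE_interval_False[OF cd] by blast
qed

lemma EI3:
  assumes "AE x in lebesgue. x \<in> {c<..<d} \<longrightarrow> u x \<le> z"
  shows "ess_inf_on {c<..<d} u \<le> z"
proof (rule ccontr)
  assume nt: "\<not> ?thesis"
  have "AE x in lebesgue. x \<in> {c<..<d} \<longrightarrow> False"
    using assms EI1 by eventually_elim (use nt in auto)
  thus False using AE_interval_False[OF cd] by blast
qed

end

lemma ess_cong:
  assumes "AE x in lebesgue. x \<in> I \<longrightarrow> u x = v x"
  shows "ess_sup_on I u = ess_sup_on I v" "ess_inf_on I u = ess_inf_on I v" "osc_on I u = osc_on I v"
proof -
  have "{z. AE x in lebesgue. x \<in> I \<longrightarrow> u x \<le> z} = {z. AE x in lebesgue. x \<in> I \<longrightarrow> v x \<le> z}"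
  proof (intro set_eqI iffI; simp)
    fix z assume "AE x in lebesgue. x \<in> I \<longrightarrow> u x \<le> z"
    thus "AE x in lebesgue. x \<in> I \<longrightarrow> v x \<le> z" using assms by eventually_elim auto
  next
    fix z assume "AE x in lebesgue. x \<in> I \<longrightarrow> v x \<le> z"
    thus "AE x in lebesgue. x \<in> I \<longrightarrow> u x \<le> z" using assms by eventually_elim auto
  qed
  thus s: "ess_sup_on I u = ess_sup_on I v" by (simp add: ess_sup_on_def)
  have "{z. AE x in lebesgue. x \<in> I \<longrightarrow> z \<le> u x} = {z. AE x in lebesgue. x \<in> I \<longrightarrow> z \<le> v x}"
  proof (intro set_eqI iffI; simp)
    fix z assume "AE x in lebesgue. x \<in> I \<longrightarrow> z \<le> u x"
    thus "AE x in lebesgue. x \<in> I \<longrightarrow> z \<le> v x" using assms by eventually_elim auto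
  next
    fix z assume "AE x in lebesgue. x \<in> I \<longrightarrow> z \<le> v x"
    thus "AE x in lebesgue. x \<in> I \<longrightarrow> z \<le> u x" using assms by eventually_elim auto
  qed
  thus i: "ess_inf_on I u = ess_inf_on I v" by (simp add: ess_inf_on_def)
  show "osc_on I u = osc_on I v" by (simp add: osc_on_def s i)
qed

lemma Linf_loc_bnd:
  assumes "Linf_loc u"
  shows "\<exists>C. AE x in lebesgue. x \<in> {c<..<d} \<longrightarrow> \<bar>u x\<bar> \<le> C"
proof -
  obtain C where "AE x in lebesgue. x \<in> {c..d} \<longrightarrow> \<bar>u x\<bar> \<le> C"
    using assms unfolding Linf_loc_def by blast
  thus ?thesis by (intro exI[of _ C]) (auto elim: eventually_mono)
qed

definition goodpt :: "(real \<Rightarrow> real) \<Rightarrow> real \<Rightarrow> bool" where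
  "goodpt u y \<longleftrightarrow> (\<forall>p\<in>\<rat>. \<forall>q\<in>\<rat>. p < y \<and> y < q \<longrightarrow>
      ess_inf_on {p<..<q} u \<le> u y \<and> u y \<le> ess_sup_on {p<..<q} u)"

lemma goodpt_AE:
  assumes "Linf_loc u"
  shows "AE y in lebesgue. goodpt u y"
proof -
  have "AE y in lebesgue. p < y \<and> y < q \<longrightarrow> ess_inf_on {p<..<q} u \<le> u y \<and> u y \<le> ess_sup_on {p<..<q} u"
    for p q
  proof (cases "p < q")
    case True
    obtain C where C: "AE x in lebesgue. x \<in> {p<..<q} \<longrightarrow> \<bar>u x\<bar> \<le> C"
      using Linf_loc_bnd[OF assms] by blast
    show ?thesis using ES1[OF True C] EI1[OF True C] by eventually_elim auto
  qed auto
  thus ?thesis unfolding goodpt_def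
    by (simp add: AE_ball_countable[OF countable_rat])
qed

lemma goodpt_window:
  assumes L: "Linf_loc u" and g: "goodpt u y" and y: "c < y" "y < d"
  shows "ess_inf_on {c<..<d} u \<le> u y \<and> u y \<le> ess_sup_on {c<..<d} u"
proof -
  obtain p where p: "p \<in> \<rat>" "c < p" "p < y" using Rats_dense_in_real[OF y(1)] by blast
  obtain q where q: "q \<in> \<rat>" "y < q" "q < d" using Rats_dense_in_real[OF y(2)] by blast
  have cd: "c < d" "p < q" using p q by auto
  obtain C where C: "AE x in lebesgue. x \<in> {c<..<d} \<longrightarrow> \<bar>u x\<bar> \<le> C" using Linf_loc_bnd[OF L] by blast
  obtain C' where C': "AE x in lebesgue. x \<in> {p<..<q} \<longrightarrow> \<bar>u x\<bar> \<le> C'" using Linf_loc_bnd[OF L] by blast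
  have "ess_sup_on {p<..<q} u \<le> ess_sup_on {c<..<d} u"
    using ES1[OF cd(1) C] p q by (intro ES2[OF cd(2) C']) (auto elim: eventually_mono)
  moreover have "ess_inf_on {c<..<d} u \<le> ess_inf_on {p<..<q} u"
    using EI1[OF cd(1) C] p q by (intro EI2[OF cd(2) C']) (auto elim: eventually_mono)
  moreover have "ess_inf_on {p<..<q} u \<le> u y \<and> u y \<le> ess_sup_on {p<..<q} u"
    using g p q unfolding goodpt_def by blast
  ultimately show ?thesis by linarith
qed

lemma osc_bound:
  assumes L: "Linf_loc u" and "goodpt u y" "goodpt u z" "c < y" "y < d" "c < z" "z < d"
  shows "\<bar>u y - u z\<bar> \<le> osc_on {c<..<d} u"
  using goodpt_window[OF L assms(2,4,5)] goodpt_window[OF L assms(3,6,7)]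
  unfolding osc_on_def by linarith



lemma AE_translate:
  assumes "AE x in lebesgue. P x"
  shows "AE x in lebesgue. P (x + c)"
proof -
  obtain N where N: "negligible N" "{x. \<not> P x} \<subseteq> N"
    using assms eventually_ae_filter_negligible by blast
  have "{x. \<not> P (x + c)} \<subseteq> (+) (-c) ` N"
  proof
    fix x assume "x \<in> {x. \<not> P (x + c)}"
    hence "x + c \<in> N" using N by auto
    thus "x \<in> (+) (-c) ` N" by (intro image_eqI[of _ _ "x + c"]) auto
  qed
  moreover have "negligible ((+) (-c) ` N)" by (rule negligible_translation[OF N(1)])
  ultimately show ?thesis using eventually_ae_filter_negligible by blast
qed

lemma AE_lborel_lebesgue: "(AE x in lborel. P x) \<longleftrightarrow> (AE x in lebesgue. P x)"
  by (simp add: AE_completion_iff)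

lemma floor_div_iff:
  fixes h x :: real assumes h: "h > 0"
  shows "(h * of_int k \<le> x \<and> x < h * of_int k + h) \<longleftrightarrow> k = \<lfloor>x / h\<rfloor>"
proof -
  have "h * of_int k \<le> x \<longleftrightarrow> of_int k \<le> x / h" using h by (simp add: pos_le_divide_eq mult.commute)
  moreover have "x < h * of_int k + h \<longleftrightarrow> x / h < of_int k + 1" using h by (simp add: pos_divide_less_eq algebra_simps)
  moreover have "k = \<lfloor>x / h\<rfloor> \<longleftrightarrow> of_int k \<le> x / h \<and> x / h < of_int k + 1"
    by (metis floor_eq_iff)
  ultimately show ?thesis by blast
qed

lemma count_borel_measurable[simp]: "f \<in> borel_measurable (count_space UNIV)"
  by (simp add: measurable_count_space_eq1)

lemma periodize:
  fixes f :: "real \<Rightarrow> ennreal" and h :: real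
  assumes f: "f \<in> borel_measurable borel" and h: "h > 0"
  shows "(\<integral>\<^sup>+x. f x \<partial>lborel) =
    (\<integral>\<^sup>+t. indicator {0..<h} t * (\<integral>\<^sup>+k. f (t + h * of_int k) \<partial>count_space UNIV) \<partial>lborel)"
proof -
  have inner: "(\<integral>\<^sup>+t. indicator {0..<h} t * f (t + h * of_int k) \<partial>lborel) =
     (\<integral>\<^sup>+x. indicator {h * of_int k..<h * of_int k + h} x * f x \<partial>lborel)" for k :: int
  proof -
    have "(\<integral>\<^sup>+x. indicator {h * of_int k..<h * of_int k + h} x * f x \<partial>lborel) =
      ennreal \<bar>1\<bar> * (\<integral>\<^sup>+x. indicator {h * of_int k..<h * of_int k + h} (h * of_int k + 1 * x) * f (h * of_int k + 1 * x) \<partial>lborel)"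
      using f by (intro nn_integral_real_affine) auto
    also have "\<dots> = (\<integral>\<^sup>+t. indicator {0..<h} t * f (t + h * of_int k) \<partial>lborel)"
      apply simp by (intro nn_integral_cong) (auto simp: indicator_def add.commute)
    finally show ?thesis by simp
  qed
  have one: "(\<integral>\<^sup>+k. indicator {h * of_int k..<h * of_int k + h} x * f x \<partial>count_space UNIV) = f x" for x
  proof -
    have "(\<lambda>k::int. indicator {h * of_int k..<h * of_int k + h} x * f x) = (\<lambda>k. f x * indicator {\<lfloor>x / h\<rfloor>} k)"
      using floor_div_iff[OF h] by (auto simp: indicator_def fun_eq_iff)
    hence "(\<integral>\<^sup>+k. indicator {h * of_int k..<h * of_int k + h} x * f x \<partial>count_space UNIV) =
       f x * emeasure (count_space UNIV) {\<lfloor>x / h\<rfloor>}"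
      by (simp add: nn_integral_cmult_indicator)
    thus ?thesis by (simp add: emeasure_count_space_finite)
  qed
  have "(\<integral>\<^sup>+t. indicator {0..<h} t * (\<integral>\<^sup>+k. f (t + h * of_int k) \<partial>count_space UNIV) \<partial>lborel) =
     (\<integral>\<^sup>+t. (\<integral>\<^sup>+k. indicator {0..<h} t * f (t + h * of_int k) \<partial>count_space UNIV) \<partial>lborel)"
    by (intro nn_integral_cong) (simp add: nn_integral_cmult)
  also have "\<dots> = (\<integral>\<^sup>+k. (\<integral>\<^sup>+t. indicator {0..<h} t * f (t + h * of_int k) \<partial>lborel) \<partial>count_space UNIV)"
    using f by (intro nn_integral_count_space_nn_integral) auto
  also have "\<dots> = (\<integral>\<^sup>+k. (\<integral>\<^sup>+x. indicator {h * of_int k..<h * of_int k + h} x * f x \<partial>lborel) \<partial>count_space UNIV)"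
    by (simp add: inner)
  also have "\<dots> = (\<integral>\<^sup>+x. (\<integral>\<^sup>+k. indicator {h * of_int k..<h * of_int k + h} x * f x \<partial>count_space UNIV) \<partial>lborel)"
    using f by (intro nn_integral_count_space_nn_integral[symmetric]) auto
  also have "\<dots> = (\<integral>\<^sup>+x. f x \<partial>lborel)" by (simp add: one)
  finally show ?thesis by simp
qed

lemma step_integral:
  fixes \<psi> :: "int \<Rightarrow> ennreal" and h :: real
  assumes h: "h > 0"
  shows "(\<integral>\<^sup>+x. \<psi> \<lfloor>x / h\<rfloor> \<partial>lborel) = ennreal h * (\<integral>\<^sup>+k. \<psi> k \<partial>count_space UNIV)"
proof -
  have m: "(\<lambda>x. \<psi> \<lfloor>x / h\<rfloor>) \<in> borel_measurable borel" by measurable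
  have fl: "\<lfloor>(t + h * of_int k) / h\<rfloor> = k" if "t \<in> {0..<h}" for t k
    using floor_div_iff[OF h, of k "t + h * of_int k"] that by auto
  have "(\<integral>\<^sup>+x. \<psi> \<lfloor>x / h\<rfloor> \<partial>lborel) =
     (\<integral>\<^sup>+t. indicator {0..<h} t * (\<integral>\<^sup>+k. \<psi> \<lfloor>(t + h * of_int k) / h\<rfloor> \<partial>count_space UNIV) \<partial>lborel)"
    by (rule periodize[OF m h])
  also have "\<dots> = (\<integral>\<^sup>+t. (\<integral>\<^sup>+k. \<psi> k \<partial>count_space UNIV) * indicator {0..<h} t \<partial>lborel)"
    by (intro nn_integral_cong) (auto simp: indicator_def fl)
  also have "\<dots> = (\<integral>\<^sup>+k. \<psi> k \<partial>count_space UNIV) * ennreal h"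
    using h by (simp add: nn_integral_cmult_indicator mult.commute)
  finally show ?thesis by (simp add: mult.commute)
qed

lemma nn_superadd:
  "(\<integral>\<^sup>+x. f x \<partial>M) + (\<integral>\<^sup>+x. g x \<partial>M) \<le> (\<integral>\<^sup>+x. f x + g x \<partial>M)"
proof -
  let ?G = "\<lambda>f. {s. simple_function M s \<and> s \<le> f}"
  have pair: "integral\<^sup>S M s1 + integral\<^sup>S M s2 \<le> (\<integral>\<^sup>+x. f x + g x \<partial>M)"
    if s1: "s1 \<in> ?G f" and s2: "s2 \<in> ?G g" for s1 s2
  proof -
    have "integral\<^sup>S M s1 + integral\<^sup>S M s2 = integral\<^sup>S M (\<lambda>x. s1 x + s2 x)"
      using s1 s2 by (simp add: simple_integral_add)
    also have "\<dots> \<le> (\<integral>\<^sup>+x. f x + g x \<partial>M)"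
      unfolding nn_integral_def using s1 s2
      by (intro SUP_upper) (auto intro: simple_function_add add_mono simp: le_fun_def)
    finally show ?thesis .
  qed
  have ne: "?G k \<noteq> {}" for k :: "'a \<Rightarrow> ennreal"
  proof -
    have "(\<lambda>x. 0) \<in> ?G k" by (simp add: le_fun_def)
    thus ?thesis by blast
  qed
  have step: "integral\<^sup>S M s1 + (\<integral>\<^sup>+x. g x \<partial>M) \<le> (\<integral>\<^sup>+x. f x + g x \<partial>M)" if s1: "s1 \<in> ?G f" for s1
  proof -
    have "integral\<^sup>S M s1 + (\<integral>\<^sup>+x. g x \<partial>M) = (SUP s2\<in>?G g. integral\<^sup>S M s1 + integral\<^sup>S M s2)"
      unfolding nn_integral_def[of M g] by (rule ennreal_SUP_add_right[OF ne])
    also have "\<dots> \<le> (\<integral>\<^sup>+x. f x + g x \<partial>M)"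
      using that by (intro SUP_least) (rule pair)
    finally show ?thesis .
  qed
  have "(\<integral>\<^sup>+x. f x \<partial>M) + (\<integral>\<^sup>+x. g x \<partial>M) = (SUP s1\<in>?G f. integral\<^sup>S M s1 + (\<integral>\<^sup>+x. g x \<partial>M))"
    unfolding nn_integral_def[of M f] by (rule ennreal_SUP_add_left[OF ne, symmetric])
  also have "\<dots> \<le> (\<integral>\<^sup>+x. f x + g x \<partial>M)" by (intro SUP_least step)
  finally show ?thesis .
qed

lemma nn_split_le:
  assumes A: "A \<in> sets borel"
  shows "(\<integral>\<^sup>+x. f x \<partial>lborel) \<le> (\<integral>\<^sup>+x. indicator A x * f x \<partial>lborel) + (\<integral>\<^sup>+x. indicator (- A) x * f x \<partial>lborel)"
proof -
  have A': "- A \<in> sets borel" using A by (rule borel_comp)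
  have "integral\<^sup>S lborel s \<le> (\<integral>\<^sup>+x. indicator A x * f x \<partial>lborel) + (\<integral>\<^sup>+x. indicator (- A) x * f x \<partial>lborel)"
    if s: "simple_function lborel s" "s \<le> f" for s
  proof -
    have sm: "s \<in> borel_measurable lborel" using s(1) by (rule borel_measurable_simple_function)
    have "integral\<^sup>S lborel s = (\<integral>\<^sup>+x. s x \<partial>lborel)" using s by (simp add: nn_integral_eq_simple_integral)
    also have "\<dots> = (\<integral>\<^sup>+x. indicator A x * s x + indicator (- A) x * s x \<partial>lborel)"
      by (intro nn_integral_cong) (auto simp: indicator_def)
    also have "\<dots> = (\<integral>\<^sup>+x. indicator A x * s x \<partial>lborel) + (\<integral>\<^sup>+x. indicator (- A) x * s x \<partial>lborel)"
    proof (rule nn_integral_add)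
      note [measurable] = A A' sm
      show "(\<lambda>x. indicator A x * s x) \<in> borel_measurable lborel" by measurable
      show "(\<lambda>x. indicator (- A) x * s x) \<in> borel_measurable lborel" by measurable
    qed
    also have "\<dots> \<le> (\<integral>\<^sup>+x. indicator A x * f x \<partial>lborel) + (\<integral>\<^sup>+x. indicator (- A) x * f x \<partial>lborel)"
      using s(2) by (intro add_mono nn_integral_mono) (auto simp: le_fun_def intro: mult_left_mono)
    finally show ?thesis .
  qed
  thus ?thesis unfolding nn_integral_def[of lborel f] by (auto intro!: SUP_least)
qed



lemma H_meas: "hyp_H W \<Longrightarrow> W \<in> borel_measurable borel"
  unfolding hyp_H_def by (intro borel_measurable_continuous_onI) auto

lemma energy_lborel:
  "energy r W u = (\<integral>\<^sup>+x. ennreal ((osc_on {x-r<..<x+r} u)\<^sup>2 / (2 * r\<^sup>2)) \<partial>lborel)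
     + (\<integral>\<^sup>+x. ennreal (W (u x)) \<partial>lborel)"
  unfolding energy_def by (simp add: nn_integral_completion)

lemma lower_bound:
  fixes w :: "real \<Rightarrow> real"
  assumes H: "hyp_H W" and r: "r > 0" and wm: "w \<in> borel_measurable borel" and L: "Linf_loc w"
    and h: "0 < h" "h < 2 * r"
    and gd: "AE t in lebesgue. good (\<lambda>k. w (t + h * of_int k))"
  shows "ennreal h * mm r W \<le> energy r W w"
proof -
  note [measurable] = wm H_meas[OF H]
  define D where "D x = ennreal ((w (x + h) - w x)\<^sup>2 / (2 * r\<^sup>2))" for x
  have Dm[measurable]: "D \<in> borel_measurable borel" unfolding D_def by measurable
  have g1: "AE x in lebesgue. goodpt w (x + h/2)" using AE_translate[OF goodpt_AE[OF L]] .
  have g2: "AE x in lebesgue. goodpt w (x + - h/2)" using AE_translate[OF goodpt_AE[OF L]] .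
  have "AE x in lebesgue. D (x - h/2) \<le> ennreal ((osc_on {x-r<..<x+r} w)\<^sup>2 / (2 * r\<^sup>2))"
    using g1 g2
  proof eventually_elim
    case (elim x)
    have ob: "\<bar>w (x + h/2) - w (x + - h/2)\<bar> \<le> osc_on {x-r<..<x+r} w"
      using h by (intro osc_bound[OF L elim]) auto
    have "(w (x + h/2) - w (x + - h/2))\<^sup>2 \<le> (osc_on {x-r<..<x+r} w)\<^sup>2"
      using power_mono[OF ob abs_ge_zero, of 2] by simp
    moreover have "D (x - h/2) = ennreal ((w (x + h/2) - w (x + - h/2))\<^sup>2 / (2 * r\<^sup>2))"
      unfolding D_def by (simp add: algebra_simps)
    ultimately show ?case using r
      by (auto intro!: ennreal_leI divide_right_mono)
  qed
  hence "(\<integral>\<^sup>+x. D (x - h/2) \<partial>lborel) \<le> (\<integral>\<^sup>+x. ennreal ((osc_on {x-r<..<x+r} w)\<^sup>2 / (2 * r\<^sup>2)) \<partial>lborel)"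
    by (intro nn_integral_mono_AE) (simp add: AE_lborel_lebesgue)
  moreover have "(\<integral>\<^sup>+x. D (x - h/2) \<partial>lborel) = (\<integral>\<^sup>+x. D x \<partial>lborel)"
  proof -
    have "(\<integral>\<^sup>+x. D (x - h/2) \<partial>lborel) = ennreal \<bar>1\<bar> * (\<integral>\<^sup>+x. D (h/2 + 1 * x - h/2) \<partial>lborel)"
      by (intro nn_integral_real_affine) auto
    thus ?thesis by simp
  qed
  ultimately have oscpart: "(\<integral>\<^sup>+x. D x \<partial>lborel) \<le> (\<integral>\<^sup>+x. ennreal ((osc_on {x-r<..<x+r} w)\<^sup>2 / (2 * r\<^sup>2)) \<partial>lborel)"
    by simp
  define \<Phi> where "\<Phi> y = (w (y + h) - w y)\<^sup>2 / (2 * r\<^sup>2) + W (w y)" for y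
  have \<Phi>m[measurable]: "(\<lambda>y. ennreal (\<Phi> y)) \<in> borel_measurable borel" unfolding \<Phi>_def by measurable
  have "(\<integral>\<^sup>+y. ennreal (\<Phi> y) \<partial>lborel) = (\<integral>\<^sup>+y. D y + ennreal (W (w y)) \<partial>lborel)"
    using H_nonneg[OF H] by (intro nn_integral_cong) (simp add: \<Phi>_def D_def ennreal_plus)
  also have "\<dots> = (\<integral>\<^sup>+y. D y \<partial>lborel) + (\<integral>\<^sup>+y. ennreal (W (w y)) \<partial>lborel)"
    by (intro nn_integral_add) auto
  also have "\<dots> \<le> energy r W w"
    unfolding energy_lborel using oscpart by (intro add_mono) auto
  finally have E1: "(\<integral>\<^sup>+y. ennreal (\<Phi> y) \<partial>lborel) \<le> energy r W w" .
  have eqF: "(\<integral>\<^sup>+k. ennreal (\<Phi> (t + h * of_int k)) \<partial>count_space UNIV) = FF r W (\<lambda>k. w (t + h * of_int k))" for t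
    unfolding FF_def trm_def \<Phi>_def by (simp add: algebra_simps)
  have "(\<integral>\<^sup>+y. ennreal (\<Phi> y) \<partial>lborel) =
     (\<integral>\<^sup>+t. indicator {0..<h} t * FF r W (\<lambda>k. w (t + h * of_int k)) \<partial>lborel)"
    by (subst periodize[OF \<Phi>m h(1)]) (simp add: eqF)
  also have "\<dots> \<ge> (\<integral>\<^sup>+t. mm r W * indicator {0..<h} t \<partial>lborel)"
  proof (intro nn_integral_mono_AE)
    show "AE t in lborel. mm r W * indicator {0..<h} t \<le> indicator {0..<h} t * FF r W (\<lambda>k. w (t + h * of_int k))"
      using gd unfolding AE_lborel_lebesgue[symmetric]
      by eventually_elim (auto simp: indicator_def mm_le[OF H])
  qed
  moreover have "(\<integral>\<^sup>+t. mm r W * indicator {0..<h} t \<partial>lborel) = ennreal h * mm r W"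
    using h by (simp add: nn_integral_cmult_indicator mult.commute)
  ultimately show ?thesis using E1 by (metis order_trans)
qed

lemma stair_upper:
  assumes H: "hyp_H W" and r: "r > 0" and ma: "mono a" and ab: "\<And>k. \<bar>a k\<bar> \<le> 1"
  shows "energy r W (\<lambda>x. a \<lfloor>x / (2*r)\<rfloor>) \<le> ennreal (2*r) * FF r W a"
proof -
  define u where "u x = a \<lfloor>x / (2*r)\<rfloor>" for x
  have h: "2 * r > 0" using r by simp
  note [measurable] = H_meas[OF H]
  have oscb: "(osc_on {x-r<..<x+r} u)\<^sup>2 \<le> (a (\<lfloor>(x-r)/(2*r)\<rfloor> + 1) - a \<lfloor>(x-r)/(2*r)\<rfloor>)\<^sup>2" for x
  proof -
    define k where "k = \<lfloor>(x-r)/(2*r)\<rfloor>"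
    have kx: "2*r * of_int k \<le> x - r" "x - r < 2*r * of_int k + 2*r"
      using floor_div_iff[OF h, of k "x - r"] by (auto simp: k_def)
    have uy: "a k \<le> u y \<and> u y \<le> a (k+1)" if "x - r < y" "y < x + r" for y
    proof -
      have "k \<le> \<lfloor>y / (2*r)\<rfloor>" unfolding le_floor_iff using kx that h by (simp add: pos_le_divide_eq mult.commute)
      moreover have "\<lfloor>y / (2*r)\<rfloor> \<le> k + 1" unfolding floor_le_iff using kx that h
        by (simp add: pos_divide_less_eq algebra_simps)
      ultimately show ?thesis unfolding u_def using ma by (auto intro: monoD)
    qed
    have cd: "x - r < x + r" using r by simp
    have bnd: "AE y in lebesgue. y \<in> {x-r<..<x+r} \<longrightarrow> \<bar>u y\<bar> \<le> 1" by (simp add: u_def ab)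
    have s1: "ess_sup_on {x-r<..<x+r} u \<le> a (k+1)" using uy by (intro ES2[OF cd bnd]) auto
    have s2: "a k \<le> ess_sup_on {x-r<..<x+r} u" using uy by (intro ES3[OF cd bnd]) auto
    have i1: "a k \<le> ess_inf_on {x-r<..<x+r} u" using uy by (intro EI2[OF cd bnd]) auto
    have i2: "ess_inf_on {x-r<..<x+r} u \<le> a (k+1)" using uy by (intro EI3[OF cd bnd]) auto
    have "\<bar>osc_on {x-r<..<x+r} u\<bar> \<le> \<bar>a (k+1) - a k\<bar>"
      using s1 s2 i1 i2 unfolding osc_on_def by linarith
    thus ?thesis unfolding k_def by (simp add: abs_le_square_iff)
  qed
  define \<psi>D where "\<psi>D k = ennreal ((a (k + 1) - a k)\<^sup>2 / (2 * r\<^sup>2))" for k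
  define \<psi>W where "\<psi>W k = ennreal (W (a k))" for k
  have "(\<integral>\<^sup>+x. ennreal ((osc_on {x-r<..<x+r} u)\<^sup>2 / (2 * r\<^sup>2)) \<partial>lborel) \<le> (\<integral>\<^sup>+x. \<psi>D \<lfloor>(x-r)/(2*r)\<rfloor> \<partial>lborel)"
    unfolding \<psi>D_def using oscb r by (intro nn_integral_mono ennreal_leI divide_right_mono) auto
  also have "\<dots> = ennreal \<bar>1\<bar> * (\<integral>\<^sup>+y. \<psi>D \<lfloor>(r + 1 * y - r)/(2*r)\<rfloor> \<partial>lborel)"
    by (intro nn_integral_real_affine) auto
  also have "\<dots> = (\<integral>\<^sup>+y. \<psi>D \<lfloor>y/(2*r)\<rfloor> \<partial>lborel)" by simp
  also have "\<dots> = ennreal (2*r) * (\<integral>\<^sup>+k. \<psi>D k \<partial>count_space UNIV)" by (rule step_integral[OF h])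
  finally have o: "(\<integral>\<^sup>+x. ennreal ((osc_on {x-r<..<x+r} u)\<^sup>2 / (2 * r\<^sup>2)) \<partial>lborel) \<le> ennreal (2*r) * (\<integral>\<^sup>+k. \<psi>D k \<partial>count_space UNIV)" .
  have w: "(\<integral>\<^sup>+x. ennreal (W (u x)) \<partial>lborel) = ennreal (2*r) * (\<integral>\<^sup>+k. \<psi>W k \<partial>count_space UNIV)"
    unfolding u_def \<psi>W_def by (rule step_integral[OF h])
  have "FF r W a = (\<integral>\<^sup>+k. \<psi>D k + \<psi>W k \<partial>count_space UNIV)"
    unfolding FF_def trm_def \<psi>D_def \<psi>W_def using H_nonneg[OF H]
    by (intro nn_integral_cong) (simp add: ennreal_plus)
  also have "\<dots> = (\<integral>\<^sup>+k. \<psi>D k \<partial>count_space UNIV) + (\<integral>\<^sup>+k. \<psi>W k \<partial>count_space UNIV)"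
    by (intro nn_integral_add) auto
  finally have F: "FF r W a = (\<integral>\<^sup>+k. \<psi>D k \<partial>count_space UNIV) + (\<integral>\<^sup>+k. \<psi>W k \<partial>count_space UNIV)" .
  show ?thesis
    unfolding energy_lborel F u_def[symmetric] distrib_left using o w by (intro add_mono) auto
qed



lemma filterlim_lin_top:
  fixes t h :: real
  assumes h: "h > 0"
  shows "filterlim (\<lambda>k::int. t + h * of_int k) at_top at_top"
proof (subst filterlim_at_top, intro allI)
  fix Z :: real
  show "\<forall>\<^sub>F k in at_top. Z \<le> t + h * of_int k"
    using eventually_ge_at_top[of "\<lceil>(Z - t) / h\<rceil>"]
  proof eventually_elim
    case (elim k)
    hence "(Z - t) / h \<le> of_int k" by (simp add: ceiling_le_iff)
    thus ?case using h by (simp add: pos_divide_le_eq mult.commute)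
  qed
qed

lemma filterlim_lin_bot:
  fixes t h :: real
  assumes h: "h > 0"
  shows "filterlim (\<lambda>k::int. t + h * of_int k) at_bot at_bot"
proof (subst filterlim_at_bot, intro allI)
  fix Z :: real
  show "\<forall>\<^sub>F k in at_bot. t + h * of_int k \<le> Z"
    using eventually_le_at_bot[of "\<lfloor>(Z - t) / h\<rfloor>"]
  proof eventually_elim
    case (elim k)
    hence "of_int k \<le> (Z - t) / h" by (simp add: le_floor_iff)
    thus ?case using h by (simp add: pos_le_divide_eq mult.commute)
  qed
qed

lemma good_comp:
  fixes t h :: real
  assumes "(f \<longlongrightarrow> 1) at_top" "(f \<longlongrightarrow> -1) at_bot" "h > 0"
  shows "good (\<lambda>k. f (t + h * of_int k))"
  unfolding good_def
  using filterlim_compose[OF assms(1) filterlim_lin_top[OF assms(3)]]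
        filterlim_compose[OF assms(2) filterlim_lin_bot[OF assms(3)]] by auto

lemma clamp_lims: "(clamp \<longlongrightarrow> 1) at_top" "(clamp \<longlongrightarrow> -1) at_bot"
proof -
  show "(clamp \<longlongrightarrow> 1) at_top"
    by (rule tendsto_eventually) (use eventually_ge_at_top[of 1] in \<open>eventually_elim, simp add: clamp_def\<close>)
  show "(clamp \<longlongrightarrow> -1) at_bot"
    by (rule tendsto_eventually) (use eventually_le_at_bot[of "-1"] in \<open>eventually_elim, simp add: clamp_def\<close>)
qed

lemma telescope_int:
  fixes g :: "int \<Rightarrow> real"
  assumes "m \<le> M"
  shows "(\<Sum>k\<in>{m..M}. g (k+1) - g k) = g (M+1) - g m"
proof -
  obtain n where M: "M = m + int n" using assms by (metis zle_iff_zadd)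
  have "(\<Sum>k\<in>{m..m + int n}. g (k+1) - g k) = g (m + int n + 1) - g m"
  proof (induction n)
    case 0 show ?case by simp
  next
    case (Suc n)
    have e: "{m..m + int (Suc n)} = insert (m + int n + 1) {m..m + int n}" by auto
    have "(\<Sum>k\<in>{m..m + int (Suc n)}. g (k+1) - g k) = (g (m + int n + 1 + 1) - g (m + int n + 1)) + (\<Sum>k\<in>{m..m + int n}. g (k+1) - g k)"
      unfolding e by (subst sum.insert) auto
    also have "\<dots> = g (m + int (Suc n) + 1) - g m" using Suc by simp
    finally show ?case .
  qed
  thus ?thesis using M by simp
qed

lemma FF_clamp_bound:
  assumes H: "hyp_H W" and r: "r > 0"
  shows "FF r W (\<lambda>k. clamp (s + 2*r * of_int k)) \<le>
     ennreal (2/r) + (\<integral>\<^sup>+k. ennreal (W (clamp (s + 2*r * of_int k))) \<partial>count_space UNIV)"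
proof -
  define g where "g k = clamp (s + 2*r * of_int k)" for k :: int
  define \<Delta> where "\<Delta> k = g (k+1) - g k" for k
  have D0: "0 \<le> \<Delta> k" for k
  proof -
    have "s + 2*r * of_int k \<le> s + 2*r * of_int (k+1)" using r by (simp add: algebra_simps)
    hence "g k \<le> g (k+1)" unfolding g_def by (rule clamp_mono)
    thus ?thesis unfolding \<Delta>_def by simp
  qed
  have D1: "\<Delta> k \<le> 2*r" for k
  proof -
    have "\<bar>\<Delta> k\<bar> \<le> \<bar>(s + 2*r * of_int (k+1)) - (s + 2*r * of_int k)\<bar>"
      unfolding \<Delta>_def g_def by (rule clamp_lip)
    also have "(s + 2*r * of_int (k+1)) - (s + 2*r * of_int k) = 2*r" by (simp add: algebra_simps)
    finally show ?thesis using r by simp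
  qed
  have tle: "trm r W g k \<le> \<Delta> k / r + W (g k)" for k
  proof -
    have "\<Delta> k * \<Delta> k \<le> (2*r) * \<Delta> k" using D0 D1 by (intro mult_right_mono) auto
    hence "(\<Delta> k)\<^sup>2 / (2 * r\<^sup>2) \<le> (2*r) * \<Delta> k / (2 * r\<^sup>2)" using r
      by (intro divide_right_mono) (auto simp: power2_eq_square)
    also have "\<dots> = \<Delta> k / r" using r by (simp add: power2_eq_square field_simps)
    finally show ?thesis unfolding trm_def \<Delta>_def by simp
  qed
  have tle': "ennreal (trm r W g k) \<le> ennreal (\<Delta> k / r) + ennreal (W (g k))" for k
  proof -
    have "ennreal (trm r W g k) \<le> ennreal (\<Delta> k / r + W (g k))" using tle[of k] by (rule ennreal_leI)
    also have "\<dots> = ennreal (\<Delta> k / r) + ennreal (W (g k))"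
      using D0[of k] r H_nonneg[OF H, of "g k"] by (intro ennreal_plus) auto
    finally show ?thesis .
  qed
  have "FF r W g \<le> (\<integral>\<^sup>+k. ennreal (\<Delta> k / r) + ennreal (W (g k)) \<partial>count_space UNIV)"
    unfolding FF_def by (intro nn_integral_mono tle')
  also have "\<dots> = (\<integral>\<^sup>+k. ennreal (\<Delta> k / r) \<partial>count_space UNIV) + (\<integral>\<^sup>+k. ennreal (W (g k)) \<partial>count_space UNIV)"
    by (intro nn_integral_add) auto
  finally have F1: "FF r W g \<le> (\<integral>\<^sup>+k. ennreal (\<Delta> k / r) \<partial>count_space UNIV) + (\<integral>\<^sup>+k. ennreal (W (g k)) \<partial>count_space UNIV)" .
  have F2: "(\<integral>\<^sup>+k. ennreal (\<Delta> k / r) \<partial>count_space UNIV) \<le> ennreal (2/r)"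
  proof -
    define K0 where "K0 = \<lfloor>(-1 - s) / (2*r)\<rfloor>"
    define K1 where "K1 = \<lceil>(1 - s) / (2*r)\<rceil>"
    have "of_int K0 \<le> (-1 - s) / (2*r)" unfolding K0_def by (rule of_int_floor_le)
    hence "of_int K0 * (2*r) \<le> -1 - s" using r by (simp add: pos_le_divide_eq)
    hence hK0: "2*r * of_int K0 \<le> -1 - s" by (simp add: algebra_simps)
    have "(1 - s) / (2*r) \<le> of_int K1" unfolding K1_def by (rule le_of_int_ceiling)
    hence "1 - s \<le> of_int K1 * (2*r)" using r by (simp add: pos_divide_le_eq)
    hence hK1: "1 - s \<le> 2*r * of_int K1" by (simp add: algebra_simps)
    have out: "\<Delta> k = 0" if "k \<notin> {K0..K1}" for k
    proof (cases "k < K0")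
      case True
      hence "of_int (k + 1) \<le> (of_int K0 :: real)" by linarith
      hence "2*r * of_int (k+1) \<le> 2*r * of_int K0" using r by (intro mult_left_mono) auto
      hence a: "s + 2*r * of_int (k+1) \<le> -1" using hK0 by linarith
      have "2*r * of_int k \<le> 2*r * of_int (k+1)" using r by (intro mult_left_mono) auto
      hence b: "s + 2*r * of_int k \<le> -1" using a by linarith
      show ?thesis unfolding \<Delta>_def g_def using a b by (simp add: clamp_def)
    next
      case False
      hence kK: "K1 < k" using that by auto
      hence "(of_int K1 :: real) \<le> of_int k" by linarith
      hence "2*r * of_int K1 \<le> 2*r * of_int k" using r by (intro mult_left_mono) auto
      hence a: "1 \<le> s + 2*r * of_int k" using hK1 by linarith
      have "2*r * of_int k \<le> 2*r * of_int (k+1)" using r by (intro mult_left_mono) auto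
      hence b: "1 \<le> s + 2*r * of_int (k+1)" using a by linarith
      show ?thesis unfolding \<Delta>_def g_def using a b by (simp add: clamp_def)
    qed
    have "(\<integral>\<^sup>+k. ennreal (\<Delta> k / r) \<partial>count_space UNIV) = (\<integral>\<^sup>+k. ennreal (\<Delta> k / r) * indicator {K0..K1} k \<partial>count_space UNIV)"
      using out by (intro nn_integral_cong) (auto simp: indicator_def)
    also have "\<dots> = (\<Sum>k\<in>{K0..K1}. ennreal (\<Delta> k / r) * emeasure (count_space UNIV) {k})"
      by (rule nn_integral_indicator_finite) auto
    also have "\<dots> = (\<Sum>k\<in>{K0..K1}. ennreal (\<Delta> k / r))" by (simp add: emeasure_count_space_finite)
    also have "\<dots> = ennreal (\<Sum>k\<in>{K0..K1}. \<Delta> k / r)" using D0 r by (intro sum_ennreal) auto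
    also have "\<dots> \<le> ennreal (2/r)"
    proof (intro ennreal_leI)
      have "(\<Sum>k\<in>{K0..K1}. \<Delta> k) \<le> 2"
      proof (cases "K0 \<le> K1")
        case True
        have "(\<Sum>k\<in>{K0..K1}. \<Delta> k) = g (K1+1) - g K0" unfolding \<Delta>_def by (rule telescope_int[OF True])
        also have "\<dots> \<le> 2" using clamp_abs[of "s + 2*r * of_int (K1+1)"] clamp_abs[of "s + 2*r * of_int K0"]
          unfolding g_def by (simp add: abs_le_iff)
        finally show ?thesis .
      qed simp
      thus "(\<Sum>k\<in>{K0..K1}. \<Delta> k / r) \<le> 2/r" using r by (simp add: sum_divide_distrib[symmetric] divide_right_mono)
    qed
    finally show ?thesis .
  qed
  have "FF r W g \<le> ennreal (2/r) + (\<integral>\<^sup>+k. ennreal (W (g k)) \<partial>count_space UNIV)"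
    using F1 F2 by (meson add_right_mono order_trans)
  thus ?thesis unfolding g_def .
qed



lemma clamp_meas[measurable]: "clamp \<in> borel_measurable borel"
proof -
  have "clamp = (\<lambda>t. max (-1) (min 1 t))" by (rule ext) (simp add: clamp_def)
  moreover have "(\<lambda>t::real. max (-1) (min 1 t)) \<in> borel_measurable borel" by measurable
  ultimately show ?thesis by simp
qed

lemma cW_bound:
  assumes H: "hyp_H W" and r: "r > 0"
  shows "ennreal (2*r) * mm r W \<le> ennreal (4 + c_W W)"
proof -
  have hpos: "2*r > 0" using r by simp
  note [measurable] = H_meas[OF H]
  define F where "F x = ennreal (2/r) * indicator {0..<2*r} x + ennreal (W (clamp x))" for x
  have Fm: "F \<in> borel_measurable borel" unfolding F_def by measurable
  have per: "(\<integral>\<^sup>+k. F (s + 2*r * of_int k) \<partial>count_space UNIV) =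
       ennreal (2/r) + (\<integral>\<^sup>+k. ennreal (W (clamp (s + 2*r * of_int k))) \<partial>count_space UNIV)"
    if s: "s \<in> {0..<2*r}" for s
  proof -
    have ind: "indicator {0..<2*r} (s + 2*r * of_int k) = (indicator {0::int} k :: ennreal)" for k
    proof -
      have "\<lfloor>(s + 2*r * of_int k) / (2*r)\<rfloor> = k"
        using floor_div_iff[OF hpos, of k "s + 2*r * of_int k"] s by auto
      moreover have "(s + 2*r * of_int k \<in> {0..<2*r}) \<longleftrightarrow> 0 = \<lfloor>(s + 2*r * of_int k) / (2*r)\<rfloor>"
        using floor_div_iff[OF hpos, of 0 "s + 2*r * of_int k"] by auto
      ultimately show ?thesis by (auto simp: indicator_def)
    qed
    have "(\<integral>\<^sup>+k. F (s + 2*r * of_int k) \<partial>count_space UNIV) =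
       (\<integral>\<^sup>+k. ennreal (2/r) * indicator {0::int} k \<partial>count_space UNIV) + (\<integral>\<^sup>+k. ennreal (W (clamp (s + 2*r * of_int k))) \<partial>count_space UNIV)"
      unfolding F_def ind by (intro nn_integral_add) auto
    also have "(\<integral>\<^sup>+k. ennreal (2/r) * indicator {0::int} k \<partial>count_space UNIV) = ennreal (2/r) * emeasure (count_space UNIV) {0::int}"
      by (rule nn_integral_cmult_indicator) simp
    also have "emeasure (count_space UNIV) {0::int} = 1" by (simp add: emeasure_count_space_finite)
    finally show ?thesis by simp
  qed
  have "ennreal (2*r) * mm r W = (\<integral>\<^sup>+s. mm r W * indicator {0..<2*r} s \<partial>lborel)"
    using hpos by (simp add: nn_integral_cmult_indicator mult.commute)
  also have "\<dots> \<le> (\<integral>\<^sup>+s. indicator {0..<2*r} s * (\<integral>\<^sup>+k. F (s + 2*r * of_int k) \<partial>count_space UNIV) \<partial>lborel)"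
  proof (intro nn_integral_mono)
    fix s :: real
    show "mm r W * indicator {0..<2*r} s \<le> indicator {0..<2*r} s * (\<integral>\<^sup>+k. F (s + 2*r * of_int k) \<partial>count_space UNIV)"
    proof (cases "s \<in> {0..<2*r}")
      case True
      have "mm r W \<le> FF r W (\<lambda>k. clamp (s + 2*r * of_int k))"
        by (intro mm_le[OF H] good_comp[OF clamp_lims hpos])
      also have "\<dots> \<le> (\<integral>\<^sup>+k. F (s + 2*r * of_int k) \<partial>count_space UNIV)"
        unfolding per[OF True] by (rule FF_clamp_bound[OF H r])
      finally show ?thesis using True by simp
    qed simp
  qed
  also have "\<dots> = (\<integral>\<^sup>+x. F x \<partial>lborel)" by (rule periodize[OF Fm hpos, symmetric])
  also have "\<dots> = (\<integral>\<^sup>+x. ennreal (2/r) * indicator {0..<2*r} x \<partial>lborel) + (\<integral>\<^sup>+x. ennreal (W (clamp x)) \<partial>lborel)"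
    unfolding F_def by (intro nn_integral_add) auto
  also have "(\<integral>\<^sup>+x. ennreal (2/r) * indicator {0..<2*r} x \<partial>lborel) = ennreal 4"
  proof -
    have "(\<integral>\<^sup>+x. ennreal (2/r) * indicator {0..<2*r} x \<partial>lborel) = ennreal (2/r) * ennreal (2*r)"
      using hpos by (simp add: nn_integral_cmult_indicator)
    also have "\<dots> = ennreal (2/r * (2*r))" using r by (intro ennreal_mult''[symmetric]) simp
    also have "2/r * (2*r) = 4" using r by simp
    finally show ?thesis .
  qed
  also have "(\<integral>\<^sup>+x. ennreal (W (clamp x)) \<partial>lborel) = ennreal (c_W W)"
  proof -
    have int: "(W has_integral c_W W) {-1..1}"
      unfolding c_W_def using integrable_continuous_interval[OF H_cont_on[OF H]] has_integral_integral by blast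
    have "(\<integral>\<^sup>+x. ennreal (W (clamp x)) \<partial>lborel) = (\<integral>\<^sup>+x. ennreal (indicator {-1..1} x * W x) \<partial>lborel)"
      by (simp add: clamp_ind[OF H])
    also have "\<dots> = ennreal (c_W W)"
      using H_nonneg[OF H] int by (intro nn_integral_has_integral_lebesgue) auto
    finally show ?thesis .
  qed
  also have "ennreal 4 + ennreal (c_W W) = ennreal (4 + c_W W)"
  proof -
    have "0 \<le> c_W W" unfolding c_W_def
      using integrable_continuous_interval[OF H_cont_on[OF H]] H_nonneg[OF H] by (intro integral_nonneg) auto
    thus ?thesis by (simp add: ennreal_plus)
  qed
  finally show ?thesis .
qed



lemma sup_h:
  fixes m E :: ennreal and r :: real
  assumes r: "r > 0" and fin: "m \<noteq> \<infinity>" and le: "\<And>h. 0 < h \<Longrightarrow> h < 2*r \<Longrightarrow> ennreal h * m \<le> E"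
  shows "ennreal (2*r) * m \<le> E"
proof (cases E)
  case (real e)
  obtain m' where m': "m = ennreal m'" "0 \<le> m'" using fin by (cases m) auto
  have hm: "h * m' \<le> e" if "0 < h" "h < 2*r" for h
  proof -
    have "ennreal (h * m') \<le> ennreal e" using le[OF that] m' that by (simp add: ennreal_mult'' real)
    thus ?thesis using real by (simp add: ennreal_le_iff)
  qed
  have "2*r * m' \<le> e"
  proof (cases "m' = 0")
    case True thus ?thesis using real by simp
  next
    case False
    hence mp: "m' > 0" using m' by simp
    show ?thesis
    proof (rule dense_le_bounded[of 0])
      show "0 < 2 * r * m'" using r mp by simp
      fix w assume w: "0 < w" "w < 2 * r * m'"
      have "w / m' * m' \<le> e" using w mp by (intro hm) (auto simp: field_simps)
      thus "w \<le> e" using mp by simp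
    qed
  qed
  thus ?thesis using m' real r by (simp add: ennreal_mult''[symmetric])
qed simp

lemma lower_all:
  fixes w :: "real \<Rightarrow> real"
  assumes H: "hyp_H W" and r: "r > 0" and wm: "w \<in> borel_measurable borel" and L: "Linf_loc w"
    and gd: "\<And>h. 0 < h \<Longrightarrow> AE t in lebesgue. good (\<lambda>k. w (t + h * of_int k))"
    and fin: "mm r W \<noteq> \<infinity>"
  shows "ennreal (2*r) * mm r W \<le> energy r W w"
  using r fin by (rule sup_h) (intro lower_bound[OF H r wm L] gd; simp)

lemma Linf_imp_loc: "Linf u \<Longrightarrow> Linf_loc u"
  unfolding Linf_def Linf_loc_def by (auto elim: eventually_mono)

lemma energy_split:
  fixes A :: "real set" and f :: "real \<Rightarrow> ennreal"
  shows "(\<integral>\<^sup>+x. indicator A x * f x \<partial>lborel) + (\<integral>\<^sup>+x. indicator (- A) x * f x \<partial>lborel) \<le> (\<integral>\<^sup>+x. f x \<partial>lborel)"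
proof -
  have "(\<integral>\<^sup>+x. indicator A x * f x \<partial>lborel) + (\<integral>\<^sup>+x. indicator (- A) x * f x \<partial>lborel) \<le>
      (\<integral>\<^sup>+x. indicator A x * f x + indicator (- A) x * f x \<partial>lborel)" by (rule nn_superadd)
  also have "\<dots> = (\<integral>\<^sup>+x. f x \<partial>lborel)" by (intro nn_integral_cong) (auto simp: indicator_def)
  finally show ?thesis .
qed

theorem theorem1p1:
  fixes r :: real and W :: "real \<Rightarrow> real"
  assumes "r > 0" and "hyp_H W"
  shows "\<exists>u. local_minimizer r W u \<and> admissible u \<and>
           (\<forall>v. admissible v \<longrightarrow> energy r W u \<le> energy r W v) \<and>
           energy r W u \<le> ennreal (min (4 / r) (4 + c_W W))"
proof -
  note r = assms(1) and H = assms(2)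
  have hpos: "2*r > 0" using r by simp
  obtain a where aC: "a \<in> CC" and Fa: "FF r W a = mm r W" and mmle: "mm r W \<le> ennreal (2 / r\<^sup>2)"
    using exists_min[OF H r] by blast
  have ma: "mono a" and ab: "\<And>k. \<bar>a k\<bar> \<le> 1" and ga: "good a" using aC by (auto simp: CC_def)
  have mmfin: "mm r W \<noteq> \<infinity>" using mmle by (auto simp: top_unique)
  define u where "u x = a \<lfloor>x / (2*r)\<rfloor>" for x
  have EU: "energy r W u \<le> ennreal (2*r) * mm r W"
    unfolding u_def using stair_upper[OF H r ma ab] Fa by simp
  have B1: "ennreal (2*r) * mm r W \<le> ennreal (4/r)"
  proof -
    have "ennreal (2*r) * mm r W \<le> ennreal (2*r) * ennreal (2 / r\<^sup>2)" using mmle by (rule mult_left_mono) simp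
    also have "\<dots> = ennreal (2*r * (2 / r\<^sup>2))" using r by (intro ennreal_mult''[symmetric]) simp
    also have "2*r * (2 / r\<^sup>2) = 4 / r" using r by (simp add: power2_eq_square field_simps)
    finally show ?thesis .
  qed
  have B2: "ennreal (2*r) * mm r W \<le> ennreal (4 + c_W W)" by (rule cW_bound[OF H r])
  have Ufin: "energy r W u \<noteq> \<infinity>" using EU B1 by (auto simp: top_unique)
  have bound: "energy r W u \<le> ennreal (min (4 / r) (4 + c_W W))"
    using EU B1 B2 by (cases "4 / r \<le> 4 + c_W W") (auto simp: min_def)
  have um: "u \<in> borel_measurable borel" unfolding u_def by measurable
  have uml: "u \<in> borel_measurable lebesgue"
    using um by (intro measurable_completion) (simp add: measurable_lborel2)
  have ub: "\<bar>u x\<bar> \<le> 1" for x by (simp add: u_def ab)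
  have mu: "mono u"
  proof (rule monoI)
    fix x y :: real assume "x \<le> y"
    hence "\<lfloor>x / (2*r)\<rfloor> \<le> \<lfloor>y / (2*r)\<rfloor>" using hpos by (intro floor_mono divide_right_mono) auto
    thus "u x \<le> u y" unfolding u_def by (rule monoD[OF ma])
  qed
  have fl_top: "filterlim (\<lambda>x::real. \<lfloor>x / (2*r)\<rfloor>) at_top at_top"
  proof (subst filterlim_at_top, intro allI)
    fix Z :: int
    show "\<forall>\<^sub>F x in at_top. Z \<le> \<lfloor>x / (2*r)\<rfloor>"
      using eventually_ge_at_top[of "2*r * of_int Z"]
      by eventually_elim (use hpos in \<open>simp add: le_floor_iff pos_le_divide_eq mult.commute\<close>)
  qed
  have fl_bot: "filterlim (\<lambda>x::real. \<lfloor>x / (2*r)\<rfloor>) at_bot at_bot"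
  proof (subst filterlim_at_bot, intro allI)
    fix Z :: int
    show "\<forall>\<^sub>F x in at_bot. \<lfloor>x / (2*r)\<rfloor> \<le> Z"
      using eventually_le_at_bot[of "2*r * of_int Z"]
    proof eventually_elim
      case (elim x)
      hence "x / (2*r) \<le> of_int Z" using hpos by (simp add: pos_divide_le_eq mult.commute)
      thus ?case by (simp add: floor_le_iff)
    qed
  qed
  have ut: "(u \<longlongrightarrow> 1) at_top" unfolding u_def
    using filterlim_compose[OF ga[unfolded good_def, THEN conjunct1] fl_top] by simp
  have ubt: "(u \<longlongrightarrow> -1) at_bot" unfolding u_def
    using filterlim_compose[OF ga[unfolded good_def, THEN conjunct2] fl_bot] by simp
  have Lu: "Linf u" unfolding Linf_def using uml ub by (auto intro!: exI[of _ 1])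
  have adm: "admissible u" unfolding admissible_def using Lu mu ut ubt by simp
  have minimal: "energy r W u \<le> energy r W v" if "admissible v" for v
  proof -
    have v: "Linf v" "mono v" "(v \<longlongrightarrow> 1) at_top" "(v \<longlongrightarrow> -1) at_bot"
      using that by (auto simp: admissible_def)
    have "ennreal (2*r) * mm r W \<le> energy r W v"
    proof (rule lower_all[OF H r borel_measurable_mono[OF v(2)] Linf_imp_loc[OF v(1)] _ mmfin])
      fix h :: real assume "0 < h"
      thus "AE t in lebesgue. good (\<lambda>k. v (t + h * of_int k))"
        using good_comp[OF v(3,4)] by (simp add: always_eventually)
    qed
    thus ?thesis using EU by simp
  qed
  have locmin: "local_minimizer r W u"
    unfolding local_minimizer_def
  proof (intro conjI allI impI)
    show "Linf_loc u" by (rule Linf_imp_loc[OF Lu])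
    fix p q :: real and v assume pq: "p < q" "2 * r < q - p" and Lv: "Linf_loc v"
      and eqo: "AE x in lebesgue. x \<notin> {p + r..q - r} \<longrightarrow> u x = v x"
    have vm: "v \<in> borel_measurable (completion lborel)" using Lv by (simp add: Linf_loc_def)
    obtain w where wm0: "w \<in> borel_measurable lborel" and vw0: "AE x in lborel. v x = w x"
      using completion_ex_borel_measurable_real[OF vm] by blast
    have wm: "w \<in> borel_measurable borel" using wm0 by (simp add: measurable_lborel2)
    have vw: "AE x in lebesgue. v x = w x" using vw0 by (simp add: AE_lborel_lebesgue)
    have Evw: "energy r W v = energy r W w"
    proof -
      have "osc_on {x-r<..<x+r} v = osc_on {x-r<..<x+r} w" for x
        using vw by (intro ess_cong(3)) (auto elim: eventually_mono)
      moreover have "(\<integral>\<^sup>+x. ennreal (W (v x)) \<partial>lebesgue) = (\<integral>\<^sup>+x. ennreal (W (w x)) \<partial>lebesgue)"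
        using vw by (intro nn_integral_cong_AE) (auto elim: eventually_mono)
      ultimately show ?thesis unfolding energy_def by simp
    qed
    have Lw: "Linf_loc w"
      unfolding Linf_loc_def
    proof (intro conjI allI)
      show "w \<in> borel_measurable lebesgue" using wm0 by (rule measurable_completion)
      fix c d :: real
      obtain C where "AE x in lebesgue. x \<in> {c..d} \<longrightarrow> \<bar>v x\<bar> \<le> C" using Lv unfolding Linf_loc_def by blast
      thus "\<exists>C. AE x in lebesgue. x \<in> {c..d} \<longrightarrow> \<bar>w x\<bar> \<le> C"
        using vw by (intro exI[of _ C]) (auto elim: eventually_mono)
    qed
    define P where "P x \<longleftrightarrow> (x \<notin> {p + r..q - r} \<longrightarrow> u x = v x) \<and> v x = w x" for x
    have AP: "AE x in lebesgue. P x" unfolding P_def using eqo vw by eventually_elim auto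
    have "ennreal (2*r) * mm r W \<le> energy r W w"
    proof (rule lower_all[OF H r wm Lw _ mmfin])
      fix h :: real assume h: "0 < h"
      have "AE t in lebesgue. \<forall>k::int. P (t + h * of_int k)"
        unfolding AE_all_countable using AE_translate[OF AP] by blast
      thus "AE t in lebesgue. good (\<lambda>k. w (t + h * of_int k))"
      proof eventually_elim
        case (elim t)
        have gu: "good (\<lambda>k. u (t + h * of_int k))" by (rule good_comp[OF ut ubt h])
        have e1: "\<forall>\<^sub>F k in at_top. u (t + h * of_int k) = w (t + h * of_int k)"
          using filterlim_lin_top[OF h, of t, unfolded filterlim_at_top, rule_format, of "q - r + 1"]
          by eventually_elim (use elim r in \<open>auto simp: P_def\<close>)
        have e2: "\<forall>\<^sub>F k in at_bot. u (t + h * of_int k) = w (t + h * of_int k)"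
          using filterlim_lin_bot[OF h, of t, unfolded filterlim_at_bot, rule_format, of "p + r - 1"]
          by eventually_elim (use elim r in \<open>auto simp: P_def\<close>)
        show ?case unfolding good_def
          using Lim_transform_eventually[OF gu[unfolded good_def, THEN conjunct1] e1]
                Lim_transform_eventually[OF gu[unfolded good_def, THEN conjunct2] e2] by simp
      qed
    qed
    hence Euv: "energy r W u \<le> energy r W v" using EU Evw by simp
    define A where "A = {p<..<q}"
    have Ab: "A \<in> sets borel" by (simp add: A_def)
    define Oc where "Oc f x = ennreal ((osc_on {x-r<..<x+r} f)\<^sup>2 / (2 * r\<^sup>2))" for f x
    define Wf where "Wf f x = ennreal (W (f x))" for f :: "real \<Rightarrow> real" and x :: real
    have on: "energy_on r W p q f = (\<integral>\<^sup>+x. indicator A x * Oc f x \<partial>lborel) + (\<integral>\<^sup>+x. indicator A x * Wf f x \<partial>lborel)" for f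
      unfolding energy_on_def A_def Oc_def Wf_def by (simp add: nn_integral_completion)
    have en: "energy r W f = (\<integral>\<^sup>+x. Oc f x \<partial>lborel) + (\<integral>\<^sup>+x. Wf f x \<partial>lborel)" for f
      unfolding energy_lborel Oc_def Wf_def by simp
    define off where "off f = (\<integral>\<^sup>+x. indicator (- A) x * Oc f x \<partial>lborel) + (\<integral>\<^sup>+x. indicator (- A) x * Wf f x \<partial>lborel)" for f
    have outside: "x \<notin> {p + r..q - r}" if "x \<notin> A" for x using that r by (auto simp: A_def)
    have offeq: "off u = off v"
    proof -
      have "indicator (- A) x * Oc u x = indicator (- A) x * Oc v x" for x
      proof (cases "x \<in> A")
        case False
        have "AE y in lebesgue. y \<in> {x-r<..<x+r} \<longrightarrow> u y = v y"
          using eqo by eventually_elim (use False r in \<open>auto simp: A_def\<close>)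
        hence "osc_on {x-r<..<x+r} u = osc_on {x-r<..<x+r} v" by (rule ess_cong(3))
        thus ?thesis by (simp add: Oc_def)
      qed simp
      moreover have "(\<integral>\<^sup>+x. indicator (- A) x * Wf u x \<partial>lborel) = (\<integral>\<^sup>+x. indicator (- A) x * Wf v x \<partial>lborel)"
      proof (intro nn_integral_cong_AE)
        show "AE x in lborel. indicator (- A) x * Wf u x = indicator (- A) x * Wf v x"
          unfolding AE_lborel_lebesgue using eqo
          by eventually_elim (use outside in \<open>auto simp: Wf_def indicator_def\<close>)
      qed
      ultimately show ?thesis unfolding off_def by simp
    qed
    have usplit: "energy_on r W p q u + off u \<le> energy r W u"
    proof -
      have "energy_on r W p q u + off u =
          ((\<integral>\<^sup>+x. indicator A x * Oc u x \<partial>lborel) + (\<integral>\<^sup>+x. indicator (- A) x * Oc u x \<partial>lborel)) +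
          ((\<integral>\<^sup>+x. indicator A x * Wf u x \<partial>lborel) + (\<integral>\<^sup>+x. indicator (- A) x * Wf u x \<partial>lborel))"
        unfolding on off_def by (simp add: ac_simps)
      also have "\<dots> \<le> energy r W u" unfolding en by (intro add_mono energy_split)
      finally show ?thesis .
    qed
    have vsplit: "energy r W v \<le> energy_on r W p q v + off v"
    proof -
      have "energy r W v \<le>
          ((\<integral>\<^sup>+x. indicator A x * Oc v x \<partial>lborel) + (\<integral>\<^sup>+x. indicator (- A) x * Oc v x \<partial>lborel)) +
          ((\<integral>\<^sup>+x. indicator A x * Wf v x \<partial>lborel) + (\<integral>\<^sup>+x. indicator (- A) x * Wf v x \<partial>lborel))"
        unfolding en by (intro add_mono nn_split_le Ab)
      also have "\<dots> = energy_on r W p q v + off v"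
        unfolding on off_def by (simp add: ac_simps)
      finally show ?thesis .
    qed
    have "off u + energy_on r W p q u \<le> off u + energy_on r W p q v"
      using usplit Euv vsplit offeq by (simp add: add.commute order_trans)
    moreover have "off u \<noteq> \<infinity>"
    proof
      assume "off u = \<infinity>"
      hence "energy r W u = \<infinity>" using usplit by (simp add: top_unique)
      thus False using Ufin by simp
    qed
    ultimately show "energy_on r W p q u \<le> energy_on r W p q v"
      by (simp add: ennreal_add_left_cancel_le)
  qed
  show ?thesis using locmin adm minimal bound by blast
qed


end
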